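(* Let $\Omega\subset\mathbb R^n$, $n\ge2$, be a bounded domain with $\partial\Omega$ of class $C^{2,\alpha}$, and let $\Sigma$ be a closed smooth submanifold of $\Omega$ of codimension at least $2$ (possibly with $\partial\Sigma\ne\emptyset$). Let $u\in C^2(\Omega\setminus\Sigma)\cap C^1(\overline\Omega\setminus\Sigma)$ satisfy $\Delta u\ge0$ in $\Omega\setminus\Sigma$, $0\le u\le1$ in $\Omega\setminus\Sigma$, and $u=0$ on $\partial\Omega$. Then $u\equiv0$. *)

theory Defs
  imports "HOL-Analysis.Analysis"
begin

fun Ck_on :: "nat \<Rightarrow> 'a::euclidean_space set \<Rightarrow> ('a \<Rightarrow> 'b::real_normed_vector) \<Rightarrow> bool" where
  "Ck_on 0 S f = continuous_on S f"
| "Ck_on (Suc k) S f =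
     ((\<forall>x\<in>S. f differentiable (at x)) \<and>
      (\<forall>i\<in>Basis. Ck_on k S (\<lambda>x. frechet_derivative f (at x) i)))"

definition smooth_on :: "'a::euclidean_space set \<Rightarrow> ('a \<Rightarrow> 'b::real_normed_vector) \<Rightarrow> bool" where
  "smooth_on S f \<longleftrightarrow> (\<forall>k. Ck_on k S f)"

definition partial :: "('a::euclidean_space \<Rightarrow> real) \<Rightarrow> 'a \<Rightarrow> 'a \<Rightarrow> real" where
  "partial f i x = frechet_derivative f (at x) i"

definition laplacian :: "('a::euclidean_space \<Rightarrow> real) \<Rightarrow> 'a \<Rightarrow> real" where
  "laplacian u x = (\<Sum>i\<in>Basis. partial (partial u i) i x)"

definition C1_upto :: "'a::euclidean_space set \<Rightarrow> 'a set \<Rightarrow> ('a \<Rightarrow> real) \<Rightarrow> bool" where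
  "C1_upto \<Omega> \<Sigma> u \<longleftrightarrow>
     Ck_on 1 (\<Omega> - \<Sigma>) u \<and> continuous_on (closure \<Omega> - \<Sigma>) u \<and>
     (\<forall>i\<in>Basis. \<exists>g. continuous_on (closure \<Omega> - \<Sigma>) g \<and>
                     (\<forall>x\<in>\<Omega> - \<Sigma>. g x = partial u i x))"

text \<open>Boundary of class C^{2,alpha}: near every boundary point, Omega is the sublevel set
  {psi < 0} of a local defining function psi of class C^{2,alpha} with nonvanishing gradient.\<close>
definition C2alpha_boundary :: "real \<Rightarrow> 'a::euclidean_space set \<Rightarrow> bool" where
  "C2alpha_boundary \<alpha> \<Omega> \<longleftrightarrow>
     (\<forall>p\<in>frontier \<Omega>. \<exists>U \<psi> C. open U \<and> p \<in> U \<and> Ck_on 2 U \<psi> \<and>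
        (\<forall>x\<in>U. \<exists>i\<in>Basis. partial \<psi> i x \<noteq> 0) \<and>
        \<Omega> \<inter> U = {x\<in>U. \<psi> x < 0} \<and>
        (\<forall>i\<in>Basis. \<forall>j\<in>Basis. \<forall>x\<in>U. \<forall>y\<in>U.
           \<bar>partial (partial \<psi> i) j x - partial (partial \<psi> i) j y\<bar> \<le> C * norm (x - y) powr \<alpha>))"

definition smooth_diffeo :: "'a::euclidean_space set \<Rightarrow> 'a set \<Rightarrow> ('a \<Rightarrow> 'a) \<Rightarrow> bool" where
  "smooth_diffeo U V \<phi> \<longleftrightarrow> open U \<and> open V \<and> smooth_on U \<phi> \<and> \<phi> ` U = V \<and>
     (\<exists>\<psi>. smooth_on V \<psi> \<and> (\<forall>x\<in>U. \<psi> (\<phi> x) = x) \<and> (\<forall>y\<in>V. \<phi> (\<psi> y) = y))"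

text \<open>Sigma is a smooth embedded submanifold (possibly with boundary) of codimension at least 2:
  around each of its points it is straightened by a smooth diffeomorphism to a coordinate
  subspace spanned by a set B of at most n-2 basis vectors, or to a closed half of such a
  subspace (boundary points).\<close>
definition smooth_submanifold_codim2 :: "'a::euclidean_space set \<Rightarrow> bool" where
  "smooth_submanifold_codim2 \<Sigma> \<longleftrightarrow>
     (\<forall>p\<in>\<Sigma>. \<exists>U V \<phi> B. p \<in> U \<and> smooth_diffeo U V \<phi> \<and> B \<subseteq> Basis \<and>
        card B + 2 \<le> DIM('a) \<and>
        (\<phi> ` (\<Sigma> \<inter> U) = V \<inter> span B \<or>
         (\<exists>b\<in>B. \<phi> ` (\<Sigma> \<inter> U) = V \<inter> {y\<in>span B. y \<bullet> b \<ge> 0})))"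

end

theory Submission
  imports Defs
begin

lemma Ck_on_cong:
  assumes "open S" "\<And>x. x \<in> S \<Longrightarrow> f x = g x"
  shows "Ck_on k S f = Ck_on k S g"
  using assms(2)
proof (induction k arbitrary: f g)
  case 0
  then show ?case using continuous_on_cong by (metis Ck_on.simps(1))
next
  case (Suc k)
  have d: "f differentiable (at x) \<longleftrightarrow> g differentiable (at x)" if "x \<in> S" for x
    unfolding differentiable_def
    using has_derivative_transform_within_open[OF _ assms(1) that, of f _ UNIV g]
          has_derivative_transform_within_open[OF _ assms(1) that, of g _ UNIV f] Suc.prems
    by metis
  have fd: "frechet_derivative f (at x) = frechet_derivative g (at x)" if "x \<in> S" for x
    unfolding frechet_derivative_def
    using has_derivative_transform_within_open[OF _ assms(1) that, of f _ UNIV g]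
          has_derivative_transform_within_open[OF _ assms(1) that, of g _ UNIV f] Suc.prems
    by metis
  show ?case
    apply (simp only: Ck_on.simps)
    apply (intro iffI conjI ballI; elim conjE)
    using d apply blast
    subgoal for i using Suc.IH[of "\<lambda>x. frechet_derivative f (at x) i" "\<lambda>x. frechet_derivative g (at x) i"] fd by auto
    using d apply blast
    subgoal for i using Suc.IH[of "\<lambda>x. frechet_derivative f (at x) i" "\<lambda>x. frechet_derivative g (at x) i"] fd by auto
    done
qed

lemma Ck_on_cont: "Ck_on k S f \<Longrightarrow> continuous_on S f"
  by (cases k) (auto intro!: continuous_at_imp_continuous_on differentiable_imp_continuous_within)

lemma Ck_on_diff: "Ck_on (Suc k) S f \<Longrightarrow> x \<in> S \<Longrightarrow> f differentiable (at x)"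
  by simp

lemma Ck_on_partial: "Ck_on (Suc k) S f \<Longrightarrow> i \<in> Basis \<Longrightarrow> Ck_on k S (partial f i)"
  by (simp add: partial_def[abs_def])

lemma Ck_on_inner:
  assumes "open S" "Ck_on k S \<phi>"
  shows "Ck_on k S (\<lambda>x. \<phi> x \<bullet> a)"
  using assms(2)
proof (induction k arbitrary: \<phi>)
  case 0
  then show ?case by (auto intro!: continuous_intros)
next
  case (Suc k)
  have fd: "frechet_derivative (\<lambda>x. \<phi> x \<bullet> a) (at x) i = frechet_derivative \<phi> (at x) i \<bullet> a"
    if "x \<in> S" for x i
  proof -
    have "(\<phi> has_derivative frechet_derivative \<phi> (at x)) (at x)"
      using Suc.prems that by (simp add: frechet_derivative_works)
    then have "((\<lambda>x. \<phi> x \<bullet> a) has_derivative (\<lambda>h. frechet_derivative \<phi> (at x) h \<bullet> a)) (at x)"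
      by (auto intro!: derivative_eq_intros)
    then show ?thesis using frechet_derivative_at by metis
  qed
  have diff: "(\<lambda>x. \<phi> x \<bullet> a) differentiable (at x)" if "x \<in> S" for x
  proof -
    have "(\<phi> has_derivative frechet_derivative \<phi> (at x)) (at x)"
      using Suc.prems that by (simp add: frechet_derivative_works)
    then have "((\<lambda>x. \<phi> x \<bullet> a) has_derivative (\<lambda>h. frechet_derivative \<phi> (at x) h \<bullet> a)) (at x)"
      by (auto intro!: derivative_eq_intros)
    then show ?thesis unfolding differentiable_def by blast
  qed
  show ?case
  proof (simp only: Ck_on.simps, intro conjI ballI)
    show "(\<lambda>x. \<phi> x \<bullet> a) differentiable (at x)" if "x \<in> S" for x using diff that .
    fix i :: 'a assume i: "i \<in> Basis"
    have "Ck_on k S (\<lambda>x. frechet_derivative \<phi> (at x) i \<bullet> a)"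
      using Suc.IH Suc.prems i by simp
    then show "Ck_on k S (\<lambda>x. frechet_derivative (\<lambda>x. \<phi> x \<bullet> a) (at x) i)"
      using Ck_on_cong[OF assms(1), of "\<lambda>x. frechet_derivative (\<lambda>x. \<phi> x \<bullet> a) (at x) i"] fd by auto
  qed
qed

lemma partial_inner:
  assumes "\<phi> differentiable (at x)"
  shows "partial (\<lambda>x. \<phi> x \<bullet> a) i x = frechet_derivative \<phi> (at x) i \<bullet> a"
proof -
  have "(\<phi> has_derivative frechet_derivative \<phi> (at x)) (at x)"
    using assms by (simp add: frechet_derivative_works)
  then have "((\<lambda>x. \<phi> x \<bullet> a) has_derivative (\<lambda>h. frechet_derivative \<phi> (at x) h \<bullet> a)) (at x)"
    by (auto intro!: derivative_eq_intros)
  then show ?thesis unfolding partial_def using frechet_derivative_at by metis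
qed

lemma line_deriv:
  fixes F :: "'a::euclidean_space \<Rightarrow> real"
  assumes "F differentiable (at (y + t *\<^sub>R i))"
  shows "((\<lambda>s. F (y + s *\<^sub>R i)) has_real_derivative partial F i (y + t *\<^sub>R i)) (at t)"
proof -
  have F: "(F has_derivative frechet_derivative F (at (y + t *\<^sub>R i))) (at (y + t *\<^sub>R i))"
    using assms by (simp add: frechet_derivative_works)
  have L: "((\<lambda>s. y + s *\<^sub>R i) has_derivative (\<lambda>h. h *\<^sub>R i)) (at t)"
    by (auto intro!: derivative_eq_intros)
  have "((\<lambda>s. F (y + s *\<^sub>R i)) has_derivative (\<lambda>h. frechet_derivative F (at (y + t *\<^sub>R i)) (h *\<^sub>R i))) (at t)"
    using has_derivative_compose[OF L F] by (simp add: o_def)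
  moreover have "linear (frechet_derivative F (at (y + t *\<^sub>R i)))"
    using F has_derivative_linear by blast
  ultimately have "((\<lambda>s. F (y + s *\<^sub>R i)) has_derivative (\<lambda>h. h * partial F i (y + t *\<^sub>R i))) (at t)"
    unfolding partial_def by (simp add: linear_cmul mult.commute)
  moreover have "(\<lambda>h. h * partial F i (y + t *\<^sub>R i)) = (*) (partial F i (y + t *\<^sub>R i))"
    by (auto simp: fun_eq_iff)
  ultimately show ?thesis unfolding has_field_derivative_def by simp
qed

lemma second_deriv_test:
  fixes g g1 :: "real \<Rightarrow> real"
  assumes e: "e > 0" and mx: "\<And>t. \<bar>t\<bar> < e \<Longrightarrow> g t \<le> g 0"
    and d1: "\<And>t. \<bar>t\<bar> < e \<Longrightarrow> (g has_real_derivative g1 t) (at t)"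
    and d2: "(g1 has_real_derivative d) (at 0)"
  shows "d \<le> 0"
proof (rule ccontr)
  assume "\<not> d \<le> 0"
  then have dp: "d > 0" by simp
  have g10: "g1 0 = 0"
    using DERIV_local_max[OF d1[of 0] e] mx e by auto
  obtain s where s: "s > 0" "\<And>h. h > 0 \<Longrightarrow> h < s \<Longrightarrow> g1 0 < g1 (0 + h)"
    using DERIV_pos_inc_right[OF d2 dp] by blast
  define t where "t = min s e / 2"
  have t: "t > 0" "t < s" "t < e" using s e by (auto simp: t_def)
  obtain z where z: "0 < z" "z < t" "g t - g 0 = (t - 0) * g1 z"
    using MVT2[of 0 t g g1] t d1 by force
  have "g1 z > 0" using s(2)[of z] z t g10 by auto
  then have "g t > g 0" using z t by (simp add: algebra_simps)
  moreover have "g t \<le> g 0" using mx t by simp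
  ultimately show False by simp
qed

lemma G1_generic:
  fixes q :: "real \<Rightarrow> real"
  assumes "(q has_real_derivative q') (at t)" "q t > 0"
  shows "((\<lambda>s. - ln (q s) - K * sqrt (q s)) has_real_derivative (- q' / q t - K * (q' / (2 * sqrt (q t))))) (at t)"
proof -
  have l: "((\<lambda>s. ln (q s)) has_real_derivative (q' / q t)) (at t)"
    using DERIV_chain2[OF DERIV_ln_divide[OF assms(2)] assms(1)] by simp
  have r: "((\<lambda>s. sqrt (q s)) has_real_derivative (q' / (2 * sqrt (q t)))) (at t)"
  proof -
    have "(sqrt has_real_derivative inverse (sqrt (q t)) / 2) (at (q t))" using DERIV_real_sqrt[OF assms(2)] .
    from DERIV_chain2[OF this assms(1)] show ?thesis by (simp add: field_simps)
  qed
  show ?thesis using DERIV_diff[OF DERIV_minus[OF l] DERIV_cmult[OF r, of K]] by simp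
qed

lemma e2_aux: "(r::real) > 0 \<Longrightarrow> (q2*(2*r) - a*(2*(a/(2*r))))/((2*r)*(2*r)) = q2/(2*r) - a^2/(4*(r*r)*r)"
  by (simp add: field_simps power2_eq_square)

lemma G2_generic:
  fixes q q1 :: "real \<Rightarrow> real"
  assumes "(q has_real_derivative q1 t) (at t)" "(q1 has_real_derivative q2) (at t)" "q t > 0"
  shows "((\<lambda>s. - q1 s / q s - K * (q1 s / (2 * sqrt (q s)))) has_real_derivative
     (- q2 / q t + (q1 t)^2 / (q t)^2 - K * (q2 / (2 * sqrt (q t)) - (q1 t)^2 / (4 * q t * sqrt (q t))))) (at t)"
proof -
  have r: "((\<lambda>s. sqrt (q s)) has_real_derivative (q1 t / (2 * sqrt (q t)))) (at t)"
  proof -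
    have "(sqrt has_real_derivative inverse (sqrt (q t)) / 2) (at (q t))" using DERIV_real_sqrt[OF assms(3)] .
    from DERIV_chain2[OF this assms(1)] show ?thesis by (simp add: field_simps)
  qed
  have s0: "sqrt (q t) > 0" using assms(3) by simp
  have ss: "sqrt (q t) * sqrt (q t) = q t" using assms(3) by simp
  have d1: "((\<lambda>s. q1 s / q s) has_real_derivative (q2 * q t - q1 t * q1 t) / (q t * q t)) (at t)"
    using DERIV_divide[OF assms(2) assms(1)] assms(3) by simp
  have d2: "((\<lambda>s. q1 s / (2 * sqrt (q s))) has_real_derivative
      (q2 * (2 * sqrt (q t)) - q1 t * (2 * (q1 t / (2 * sqrt (q t))))) / ((2 * sqrt (q t)) * (2 * sqrt (q t)))) (at t)"
    using DERIV_divide[OF assms(2) DERIV_cmult[OF r, of 2]] s0 by (simp only: mult_eq_0_iff) simp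
  have e1: "(q2 * q t - q1 t * q1 t) / (q t * q t) = q2 / q t - (q1 t)^2 / (q t)^2"
    using assms(3) by (simp add: field_simps power2_eq_square)
  have e2: "(q2 * (2 * sqrt (q t)) - q1 t * (2 * (q1 t / (2 * sqrt (q t))))) / ((2 * sqrt (q t)) * (2 * sqrt (q t)))
     = q2 / (2 * sqrt (q t)) - (q1 t)^2 / (4 * q t * sqrt (q t))"
    using e2_aux[OF s0, of q2 "q1 t"] ss by simp
  have D: "((\<lambda>s. - (q1 s / q s) - K * (q1 s / (2 * sqrt (q s)))) has_real_derivative
     (- (q2 / q t - (q1 t)^2 / (q t)^2) - K * (q2 / (2 * sqrt (q t)) - (q1 t)^2 / (4 * q t * sqrt (q t))))) (at t)"
    by (rule DERIV_diff[OF DERIV_minus[OF d1[unfolded e1]] DERIV_cmult[OF d2[unfolded e2]]])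
  have fe: "(\<lambda>s. - q1 s / q s - K * (q1 s / (2 * sqrt (q s)))) = (\<lambda>s. - (q1 s / q s) - K * (q1 s / (2 * sqrt (q s))))"
    by (simp add: fun_eq_iff)
  show ?thesis unfolding fe by (rule DERIV_cong[OF D]) simp
qed

lemma abs_mul_le: "\<bar>x\<bar> \<le> X \<Longrightarrow> \<bar>y\<bar> \<le> Y \<Longrightarrow> \<bar>x * y\<bar> \<le> X * (Y::real)"
  by (simp add: abs_mult mult_mono')

lemma sumL_identity:
  fixes p1 p2 :: "'i \<Rightarrow> real"
  assumes "A11 = (\<Sum>i\<in>I. p1 i * p1 i)" "A12 = (\<Sum>i\<in>I. p1 i * p2 i)" "A22 = (\<Sum>i\<in>I. p2 i * p2 i)"
  shows "(\<Sum>i\<in>I. ((A22*f1 - A12*f2) * p1 i + (A11*f2 - A12*f1) * p2 i)^2)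
     = (A11*A22 - A12^2) * (A22*f1^2 - 2*A12*f1*f2 + A11*f2^2)"
proof -
  define \<alpha> where "\<alpha> = A22*f1 - A12*f2"
  define \<beta> where "\<beta> = A11*f2 - A12*f1"
  have "(\<Sum>i\<in>I. (\<alpha> * p1 i + \<beta> * p2 i)^2) = (\<Sum>i\<in>I. \<alpha>^2 * (p1 i * p1 i) + 2*\<alpha>*\<beta> * (p1 i * p2 i) + \<beta>^2 * (p2 i * p2 i))"
    by (rule sum.cong) (auto simp: power2_eq_square algebra_simps)
  also have "\<dots> = \<alpha>^2 * A11 + 2*\<alpha>*\<beta>*A12 + \<beta>^2*A22"
    by (simp add: assms sum.distrib sum_distrib_left)
  also have "\<dots> = (A11*A22 - A12^2) * (A22*f1^2 - 2*A12*f1*f2 + A11*f2^2)"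
    unfolding \<alpha>_def \<beta>_def by (simp add: power2_eq_square algebra_simps)
  finally show ?thesis unfolding \<alpha>_def \<beta>_def .
qed

lemma sumT_identity:
  fixes p1 p2 :: "'i \<Rightarrow> real"
  assumes "A11 = (\<Sum>i\<in>I. p1 i * p1 i)" "A12 = (\<Sum>i\<in>I. p1 i * p2 i)" "A22 = (\<Sum>i\<in>I. p2 i * p2 i)"
  shows "(\<Sum>i\<in>I. A22 * (p1 i * p1 i) - 2 * A12 * (p1 i * p2 i) + A11 * (p2 i * p2 i)) = 2 * (A11*A22 - A12^2)"
proof -
  have "(\<Sum>i\<in>I. A22 * (p1 i * p1 i) - 2 * A12 * (p1 i * p2 i) + A11 * (p2 i * p2 i))
     = A22 * A11 - 2 * A12 * A12 + A11 * A22"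
    by (simp only: sum.distrib sum_subtractf flip: sum_distrib_left assms)
  then show ?thesis by (simp add: power2_eq_square algebra_simps)
qed

lemma quad_lower:
  fixes a b c x y :: real
  assumes "a \<ge> 0" "c \<ge> 0" "a*c - b^2 > 0"
  shows "(a*c - b^2) * (x^2 + y^2) \<le> (a + c) * (a*x^2 + 2*b*x*y + c*y^2)"
proof -
  have "(a + c) * (a*x^2 + 2*b*x*y + c*y^2) - (a*c - b^2) * (x^2 + y^2) = (a*x + b*y)^2 + (b*x + c*y)^2"
    by (simp add: power2_eq_square algebra_simps)
  then show ?thesis by (smt (verit) zero_le_power2)
qed

definition "ba \<Lambda> (n::nat) = (real n + 1) * \<Lambda>^2"
definition "bc \<Lambda> d0 n = d0 / (4 * ba \<Lambda> n)"
definition "bE1 \<Lambda> n = real n * (10 * ba \<Lambda> n * \<Lambda>^2)"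
definition "bE2 \<Lambda> n = real n * (14 * ba \<Lambda> n * \<Lambda>)"
definition "bE3 \<Lambda> n = bE1 \<Lambda> n + ba \<Lambda> n * bE2 \<Lambda> n"
definition "bE4 \<Lambda> n = 2 * ba \<Lambda> n * bE2 \<Lambda> n + bE1 \<Lambda> n"
definition "bK \<Lambda> d0 n = bE3 \<Lambda> n * sqrt (ba \<Lambda> n) / ((bc \<Lambda> d0 n)^2 * d0)"
definition "bCG \<Lambda> d0 n = bK \<Lambda> d0 n * bE4 \<Lambda> n / (4 * bc \<Lambda> d0 n * sqrt (bc \<Lambda> d0 n))"

lemma abs3_le: "\<bar>x\<bar> \<le> X \<Longrightarrow> \<bar>y\<bar> \<le> Y \<Longrightarrow> \<bar>z\<bar> \<le> Z \<Longrightarrow> \<bar>x*y*z\<bar> \<le> X*Y*(Z::real)"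
  by (intro abs_mul_le) auto

lemma sum_abs_bound:
  assumes "card I = n" "\<And>i. i \<in> I \<Longrightarrow> \<bar>x i\<bar> \<le> (b::real)"
  shows "\<bar>\<Sum>i\<in>I. x i\<bar> \<le> real n * b"
proof (cases "finite I")
  case True
  have "\<bar>\<Sum>i\<in>I. x i\<bar> \<le> (\<Sum>i\<in>I. \<bar>x i\<bar>)" by (rule sum_abs)
  also have "\<dots> \<le> (\<Sum>i\<in>I. b)" by (rule sum_mono) (use assms in auto)
  finally show ?thesis using assms(1) by simp
next
  case False
  then show ?thesis using assms by simp
qed

lemma abs_comb3: "\<bar>x\<bar> \<le> p \<Longrightarrow> \<bar>y\<bar> \<le> q \<Longrightarrow> \<bar>z\<bar> \<le> r \<Longrightarrow> \<bar>x + 4*y + 2*z\<bar> \<le> p + 4*q + 2*(r::real)"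
  by (simp only: abs_le_iff) linarith

lemma barrier_estimate:
  fixes p1 p2 h1 h2 n11 n12 n22 nn11 nn12 nn22 :: "'i \<Rightarrow> real"
  assumes fin: "finite I" and cardI: "card I = n"
    and L1: "1 \<le> \<Lambda>"
    and bf: "\<bar>f1\<bar> \<le> \<Lambda>" "\<bar>f2\<bar> \<le> \<Lambda>"
    and bp: "\<And>i. i \<in> I \<Longrightarrow> \<bar>p1 i\<bar> \<le> \<Lambda> \<and> \<bar>p2 i\<bar> \<le> \<Lambda> \<and> \<bar>h1 i\<bar> \<le> \<Lambda> \<and> \<bar>h2 i\<bar> \<le> \<Lambda>"
    and bn: "\<And>i. i \<in> I \<Longrightarrow> \<bar>n11 i\<bar> \<le> \<Lambda> \<and> \<bar>n12 i\<bar> \<le> \<Lambda> \<and> \<bar>n22 i\<bar> \<le> \<Lambda>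
               \<and> \<bar>nn11 i\<bar> \<le> \<Lambda> \<and> \<bar>nn12 i\<bar> \<le> \<Lambda> \<and> \<bar>nn22 i\<bar> \<le> \<Lambda>"
    and A: "A11 = (\<Sum>i\<in>I. p1 i * p1 i)" "A12 = (\<Sum>i\<in>I. p1 i * p2 i)" "A22 = (\<Sum>i\<in>I. p2 i * p2 i)"
    and d0: "0 < d0" "d0 \<le> A11*A22 - A12^2"
    and nz: "f1 \<noteq> 0 \<or> f2 \<noteq> 0"
    and Qdef: "Q = A22*f1^2 - 2*A12*f1*f2 + A11*f2^2"
    and Qd: "\<And>i. Qd i = n11 i * f1^2 + 2 * n12 i * f1 * f2 + n22 i * f2^2
               + 2 * ((A22*f1 - A12*f2) * p1 i + (A11*f2 - A12*f1) * p2 i)"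
    and Qdd: "\<And>i. Qdd i = nn11 i * f1^2 + 2 * nn12 i * f1 * f2 + nn22 i * f2^2
               + 4 * (n11 i * f1 * p1 i + n12 i * (p1 i * f2 + f1 * p2 i) + n22 i * f2 * p2 i)
               + 2 * (A22 * f1 * h1 i - A12 * (h1 i * f2 + f1 * h2 i) + A11 * f2 * h2 i)
               + 2 * (A22 * (p1 i * p1 i) - 2 * A12 * (p1 i * p2 i) + A11 * (p2 i * p2 i))"
    and Kdef: "K = bK \<Lambda> d0 n"
  shows "Q > 0 \<and> (\<Sum>i\<in>I. - Qdd i / Q + (Qd i)^2 / Q^2 - K * (Qdd i / (2 * sqrt Q) - (Qd i)^2 / (4 * Q * sqrt Q)))
           \<le> bCG \<Lambda> d0 n"
proof -
  define a where "a = ba \<Lambda> n"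
  define c where "c = bc \<Lambda> d0 n"
  define D where "D = A11*A22 - A12^2"
  define \<rho> where "\<rho> = \<bar>f1\<bar> + \<bar>f2\<bar>"
  have \<rho>pos: "\<rho> > 0" using nz by (auto simp: \<rho>_def)
  have \<rho>le: "\<rho> \<le> 2*\<Lambda>" using bf by (simp add: \<rho>_def)
  have f1r: "\<bar>f1\<bar> \<le> \<rho>" and f2r: "\<bar>f2\<bar> \<le> \<rho>" by (auto simp: \<rho>_def)
  have L0: "\<Lambda> > 0" using L1 by simp
  have Lsq: "\<Lambda> \<le> \<Lambda>^2" using L1 by (simp add: power2_eq_square)
  have apos: "a \<ge> \<Lambda>^2" unfolding a_def ba_def by (simp add: mult_le_cancel_right1)
  have aL: "\<Lambda> \<le> a" using apos Lsq by linarith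
  have abA: "\<bar>(\<Sum>i\<in>I. x i * y i)\<bar> \<le> a" if "\<And>i. i\<in>I \<Longrightarrow> \<bar>x i\<bar> \<le> \<Lambda> \<and> \<bar>y i\<bar> \<le> \<Lambda>" for x y :: "'i \<Rightarrow> real"
  proof -
    have "\<bar>(\<Sum>i\<in>I. x i * y i)\<bar> \<le> (\<Sum>i\<in>I. \<bar>x i * y i\<bar>)" by (rule sum_abs)
    also have "\<dots> \<le> (\<Sum>i\<in>I. \<Lambda> * \<Lambda>)"
      by (rule sum_mono) (use that in \<open>auto intro: abs_mul_le\<close>)
    also have "\<dots> = real n * \<Lambda>^2" using cardI by (simp add: power2_eq_square)
    also have "\<dots> \<le> a" unfolding a_def ba_def by (simp add: mult_right_mono)
    finally show ?thesis .
  qed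
  have bA11: "\<bar>A11\<bar> \<le> a" unfolding A by (rule abA) (use bp in auto)
  have bA12: "\<bar>A12\<bar> \<le> a" unfolding A by (rule abA) (use bp in auto)
  have bA22: "\<bar>A22\<bar> \<le> a" unfolding A by (rule abA) (use bp in auto)
  have A11nn: "A11 \<ge> 0" unfolding A by (auto intro: sum_nonneg)
  have A22nn: "A22 \<ge> 0" unfolding A by (auto intro: sum_nonneg)
  have Dpos: "D \<ge> d0" using d0 by (simp add: D_def)
  have trpos: "A11 + A22 > 0"
  proof (rule ccontr)
    assume "\<not> A11 + A22 > 0"
    then have "A11 = 0" "A22 = 0" using A11nn A22nn by auto
    then show False using d0 by (simp add: power2_eq_square) (smt (verit) zero_le_square)
  qed
  have sq: "\<rho>^2 \<le> 2 * (f1^2 + f2^2)"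
  proof -
    have "0 \<le> (\<bar>f1\<bar> - \<bar>f2\<bar>)^2" by simp
    then show ?thesis unfolding \<rho>_def by (simp add: power2_eq_square algebra_simps)
  qed
  have cpos: "c > 0" unfolding c_def bc_def using d0 apos L0 a_def by (auto intro!: divide_pos_pos) (smt (verit) zero_less_power)
  have apos': "a > 0" using apos L0 by (smt (verit) zero_less_power)
  have q1: "D * (f1^2 + f2^2) \<le> (A22 + A11) * Q"
    using quad_lower[of A22 A11 "-A12" f1 f2] A11nn A22nn d0 unfolding D_def Qdef
    by (simp add: algebra_simps)
  have q2: "d0 * \<rho>^2 / 2 \<le> D * (f1^2 + f2^2)"
  proof -
    have "d0 * \<rho>^2 / 2 \<le> d0 * (f1^2 + f2^2)" using sq d0 by (simp add: mult_left_mono)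
    also have "\<dots> \<le> D * (f1^2 + f2^2)" using Dpos by (simp add: mult_right_mono)
    finally show ?thesis .
  qed
  have Qnn: "Q \<ge> 0"
  proof -
    have "0 \<le> (A22 + A11) * Q" using q1 q2 d0 \<rho>pos by (smt (verit) divide_nonneg_pos mult_nonneg_nonneg zero_le_power2)
    then show ?thesis using trpos by (simp add: zero_le_mult_iff)
  qed
  have Qlow: "c * \<rho>^2 \<le> Q"
  proof -
    have "(A22 + A11) * Q \<le> 2 * a * Q" using bA11 bA22 Qnn by (intro mult_right_mono) auto
    then have "d0 * \<rho>^2 / 2 \<le> 2 * a * Q" using q1 q2 by linarith
    then show ?thesis unfolding c_def bc_def a_def[symmetric] using apos' by (simp add: field_simps)
  qed
  have Qpos: "Q > 0" using Qlow cpos \<rho>pos by (smt (verit) mult_pos_pos zero_less_power)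
  have Qup: "Q \<le> a * \<rho>^2"
  proof -
    have t1: "\<bar>A22*f1^2\<bar> \<le> a * \<bar>f1\<bar>^2" by (rule abs_mul_le) (use bA22 in auto)
    have t2: "\<bar>2*A12*f1*f2\<bar> \<le> 2 * a * \<bar>f1\<bar> * \<bar>f2\<bar>"
      using bA12 by (simp add: abs_mult mult_right_mono mult_left_mono)
    have t3: "\<bar>A11*f2^2\<bar> \<le> a * \<bar>f2\<bar>^2" by (rule abs_mul_le) (use bA11 in auto)
    have "Q \<le> a * \<bar>f1\<bar>^2 + 2 * a * \<bar>f1\<bar> * \<bar>f2\<bar> + a * \<bar>f2\<bar>^2"
      unfolding Qdef using t1 t2 t3 by linarith
    also have "\<dots> = a * \<rho>^2" unfolding \<rho>_def by (simp add: power2_eq_square algebra_simps)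
    finally show ?thesis .
  qed
  define L where "L i = (A22*f1 - A12*f2) * p1 i + (A11*f2 - A12*f1) * p2 i" for i
  define R where "R i = n11 i * f1^2 + 2 * n12 i * f1 * f2 + n22 i * f2^2" for i
  define T where "T i = A22 * (p1 i * p1 i) - 2 * A12 * (p1 i * p2 i) + A11 * (p2 i * p2 i)" for i
  define S where "S i = Qdd i - 2 * T i" for i
  have QdLR: "Qd i = R i + 2 * L i" for i unfolding Qd L_def R_def ..
  have \<alpha>b: "\<bar>A22*f1 - A12*f2\<bar> \<le> a * \<rho>"
  proof -
    have "\<bar>A22*f1\<bar> \<le> a * \<bar>f1\<bar>" "\<bar>A12*f2\<bar> \<le> a * \<bar>f2\<bar>"
      using bA22 bA12 by (auto intro: abs_mul_le)
    then show ?thesis unfolding \<rho>_def by (simp only: abs_le_iff distrib_left distrib_right) linarith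
  qed
  have \<beta>b: "\<bar>A11*f2 - A12*f1\<bar> \<le> a * \<rho>"
  proof -
    have "\<bar>A11*f2\<bar> \<le> a * \<bar>f2\<bar>" "\<bar>A12*f1\<bar> \<le> a * \<bar>f1\<bar>"
      using bA11 bA12 by (auto intro: abs_mul_le)
    then show ?thesis unfolding \<rho>_def by (simp only: abs_le_iff distrib_left distrib_right) linarith
  qed
  have Lb: "\<bar>L i\<bar> \<le> 2 * a * \<Lambda> * \<rho>" if i: "i \<in> I" for i
  proof -
    have "\<bar>(A22*f1 - A12*f2) * p1 i\<bar> \<le> (a * \<rho>) * \<Lambda>" "\<bar>(A11*f2 - A12*f1) * p2 i\<bar> \<le> (a * \<rho>) * \<Lambda>"
      using \<alpha>b \<beta>b bp[OF i] by (auto intro: abs_mul_le)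
    moreover have "(a * \<rho>) * \<Lambda> = a * \<Lambda> * \<rho>" by simp
    ultimately show ?thesis unfolding L_def by (simp only: abs_le_iff) linarith
  qed
  have Rb: "\<bar>R i\<bar> \<le> \<Lambda> * \<rho>^2" if i: "i \<in> I" for i
  proof -
    have t1: "\<bar>n11 i * f1^2\<bar> \<le> \<Lambda> * \<bar>f1\<bar>^2" using bn[OF i] by (auto intro: abs_mul_le)
    have t2: "\<bar>2 * n12 i * f1 * f2\<bar> \<le> (2 * \<Lambda>) * \<bar>f1\<bar> * \<bar>f2\<bar>" using bn[OF i] by (intro abs3_le) auto
    have t3: "\<bar>n22 i * f2^2\<bar> \<le> \<Lambda> * \<bar>f2\<bar>^2" using bn[OF i] by (auto intro: abs_mul_le)
    have "\<Lambda> * \<bar>f1\<bar>^2 + (2 * \<Lambda>) * \<bar>f1\<bar> * \<bar>f2\<bar> + \<Lambda> * \<bar>f2\<bar>^2 = \<Lambda> * \<rho>^2"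
      unfolding \<rho>_def by (simp add: power2_eq_square algebra_simps)
    then show ?thesis using t1 t2 t3 unfolding R_def by (simp only: abs_le_iff) linarith
  qed
  have L2a: "\<Lambda>^2 \<le> a * \<Lambda>" using aL L0 by (simp add: power2_eq_square mult_right_mono)
  have Sb: "\<bar>S i\<bar> \<le> 14 * a * \<Lambda> * \<rho>" if i: "i \<in> I" for i
  proof -
    have eqS: "S i = (nn11 i * f1^2 + 2 * nn12 i * f1 * f2 + nn22 i * f2^2)
       + 4 * (n11 i * f1 * p1 i + n12 i * (p1 i * f2 + f1 * p2 i) + n22 i * f2 * p2 i)
       + 2 * (A22 * f1 * h1 i - A12 * (h1 i * f2 + f1 * h2 i) + A11 * f2 * h2 i)"
      unfolding S_def Qdd T_def by simp
    have P1: "\<bar>nn11 i * f1^2 + 2 * nn12 i * f1 * f2 + nn22 i * f2^2\<bar> \<le> \<Lambda> * \<rho>^2"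
    proof -
      have t1: "\<bar>nn11 i * f1^2\<bar> \<le> \<Lambda> * \<bar>f1\<bar>^2" using bn[OF i] by (auto intro: abs_mul_le)
      have t2: "\<bar>2 * nn12 i * f1 * f2\<bar> \<le> (2 * \<Lambda>) * \<bar>f1\<bar> * \<bar>f2\<bar>" using bn[OF i] by (intro abs3_le) auto
      have t3: "\<bar>nn22 i * f2^2\<bar> \<le> \<Lambda> * \<bar>f2\<bar>^2" using bn[OF i] by (auto intro: abs_mul_le)
      have "\<Lambda> * \<bar>f1\<bar>^2 + (2 * \<Lambda>) * \<bar>f1\<bar> * \<bar>f2\<bar> + \<Lambda> * \<bar>f2\<bar>^2 = \<Lambda> * \<rho>^2"
        unfolding \<rho>_def by (simp add: power2_eq_square algebra_simps)
      then show ?thesis using t1 t2 t3 by (simp only: abs_le_iff) linarith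
    qed
    have P2: "\<bar>n11 i * f1 * p1 i + n12 i * (p1 i * f2 + f1 * p2 i) + n22 i * f2 * p2 i\<bar> \<le> 2 * \<Lambda>^2 * \<rho>"
    proof -
      have x1: "\<bar>n11 i * f1 * p1 i\<bar> \<le> \<Lambda> * \<bar>f1\<bar> * \<Lambda>" using bn[OF i] bp[OF i] by (intro abs3_le) auto
      have x2a: "\<bar>p1 i * f2 + f1 * p2 i\<bar> \<le> \<Lambda> * \<bar>f2\<bar> + \<bar>f1\<bar> * \<Lambda>"
      proof -
        have "\<bar>p1 i * f2\<bar> \<le> \<Lambda> * \<bar>f2\<bar>" "\<bar>f1 * p2 i\<bar> \<le> \<bar>f1\<bar> * \<Lambda>" using bp[OF i] by (auto intro: abs_mul_le)
        then show ?thesis by (simp only: abs_le_iff) linarith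
      qed
      have x2: "\<bar>n12 i * (p1 i * f2 + f1 * p2 i)\<bar> \<le> \<Lambda> * (\<Lambda> * \<bar>f2\<bar> + \<bar>f1\<bar> * \<Lambda>)"
        using bn[OF i] x2a by (intro abs_mul_le) auto
      have x3: "\<bar>n22 i * f2 * p2 i\<bar> \<le> \<Lambda> * \<bar>f2\<bar> * \<Lambda>" using bn[OF i] bp[OF i] by (intro abs3_le) auto
      have "\<Lambda> * \<bar>f1\<bar> * \<Lambda> + \<Lambda> * (\<Lambda> * \<bar>f2\<bar> + \<bar>f1\<bar> * \<Lambda>) + \<Lambda> * \<bar>f2\<bar> * \<Lambda> = 2 * \<Lambda>^2 * \<rho>"
        unfolding \<rho>_def by (simp add: power2_eq_square algebra_simps)
      then show ?thesis using x1 x2 x3 by (simp only: abs_le_iff) linarith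
    qed
    have P3: "\<bar>A22 * f1 * h1 i - A12 * (h1 i * f2 + f1 * h2 i) + A11 * f2 * h2 i\<bar> \<le> 2 * a * \<Lambda> * \<rho>"
    proof -
      have x1: "\<bar>A22 * f1 * h1 i\<bar> \<le> a * \<bar>f1\<bar> * \<Lambda>" using bA22 bp[OF i] by (intro abs3_le) auto
      have x2a: "\<bar>h1 i * f2 + f1 * h2 i\<bar> \<le> \<Lambda> * \<bar>f2\<bar> + \<bar>f1\<bar> * \<Lambda>"
      proof -
        have "\<bar>h1 i * f2\<bar> \<le> \<Lambda> * \<bar>f2\<bar>" "\<bar>f1 * h2 i\<bar> \<le> \<bar>f1\<bar> * \<Lambda>" using bp[OF i] by (auto intro: abs_mul_le)
        then show ?thesis by (simp only: abs_le_iff) linarith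
      qed
      have x2: "\<bar>A12 * (h1 i * f2 + f1 * h2 i)\<bar> \<le> a * (\<Lambda> * \<bar>f2\<bar> + \<bar>f1\<bar> * \<Lambda>)"
        using bA12 x2a by (intro abs_mul_le) auto
      have x3: "\<bar>A11 * f2 * h2 i\<bar> \<le> a * \<bar>f2\<bar> * \<Lambda>" using bA11 bp[OF i] by (intro abs3_le) auto
      have "a * \<bar>f1\<bar> * \<Lambda> + a * (\<Lambda> * \<bar>f2\<bar> + \<bar>f1\<bar> * \<Lambda>) + a * \<bar>f2\<bar> * \<Lambda> = 2 * a * \<Lambda> * \<rho>"
        unfolding \<rho>_def by (simp add: algebra_simps)
      then show ?thesis using x1 x2 x3 by (simp only: abs_le_iff) linarith
    qed
    have e1: "\<Lambda> * \<rho>^2 \<le> 2 * \<Lambda>^2 * \<rho>"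
    proof -
      have "\<Lambda> * \<rho> * \<rho> \<le> \<Lambda> * \<rho> * (2 * \<Lambda>)" using \<rho>le L0 \<rho>pos by (intro mult_left_mono) auto
      then show ?thesis by (simp add: power2_eq_square algebra_simps)
    qed
    have e2: "\<Lambda>^2 * \<rho> \<le> a * \<Lambda> * \<rho>" using L2a \<rho>pos by (simp add: mult_right_mono)
    have r1: "2 * \<Lambda>^2 * \<rho> = 2 * (\<Lambda>^2 * \<rho>)" "2 * a * \<Lambda> * \<rho> = 2 * (a * \<Lambda> * \<rho>)"
      "14 * a * \<Lambda> * \<rho> = 14 * (a * \<Lambda> * \<rho>)" by simp_all
    have "\<Lambda> * \<rho>^2 + 4 * (2 * \<Lambda>^2 * \<rho>) + 2 * (2 * a * \<Lambda> * \<rho>) \<le> 14 * a * \<Lambda> * \<rho>"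
      using e1 e2 r1 by linarith
    then show ?thesis unfolding eqS using abs_comb3[OF P1 P2 P3] by linarith
  qed
  have RLb: "\<bar>(Qd i)^2 - 4 * (L i)^2\<bar> \<le> 10 * a * \<Lambda>^2 * \<rho>^3" if i: "i \<in> I" for i
  proof -
    have eq: "(Qd i)^2 - 4 * (L i)^2 = R i * R i + 4 * (R i * L i)" unfolding QdLR by (simp add: power2_eq_square algebra_simps)
    have b1: "\<bar>R i * R i\<bar> \<le> (\<Lambda> * \<rho>^2) * (\<Lambda> * \<rho>^2)" by (rule abs_mul_le[OF Rb[OF i] Rb[OF i]])
    have b2: "\<bar>R i * L i\<bar> \<le> (\<Lambda> * \<rho>^2) * (2 * a * \<Lambda> * \<rho>)" using Rb[OF i] Lb[OF i] by (rule abs_mul_le)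
    have b3: "(\<Lambda> * \<rho>^2) * (\<Lambda> * \<rho>^2) \<le> 2 * a * \<Lambda>^2 * \<rho>^3"
    proof -
      have "(\<Lambda> * \<rho>^2) * (\<Lambda> * \<rho>^2) = (\<Lambda>^2 * \<rho>^3) * \<rho>" by (simp add: power2_eq_square power3_eq_cube)
      also have "\<dots> \<le> (\<Lambda>^2 * \<rho>^3) * (2 * a)" using \<rho>le aL \<rho>pos by (intro mult_left_mono) auto
      finally show ?thesis by (simp add: algebra_simps)
    qed
    have b4: "(\<Lambda> * \<rho>^2) * (2 * a * \<Lambda> * \<rho>) = 2 * a * \<Lambda>^2 * \<rho>^3" by (simp add: power2_eq_square power3_eq_cube)
    have r1: "2 * a * \<Lambda>^2 * \<rho>^3 = 2 * (a * \<Lambda>^2 * \<rho>^3)" "10 * a * \<Lambda>^2 * \<rho>^3 = 10 * (a * \<Lambda>^2 * \<rho>^3)" by simp_all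
    show ?thesis unfolding eq using b1 b2 b3 b4 r1 by (simp only: abs_le_iff) linarith
  qed
  define W where "W = (\<Sum>i\<in>I. (Qd i)^2)"
  define Ts where "Ts = (\<Sum>i\<in>I. Qdd i)"
  define E1 where "E1 = bE1 \<Lambda> n"
  define E2 where "E2 = bE2 \<Lambda> n"
  define E3 where "E3 = bE3 \<Lambda> n"
  define E4 where "E4 = bE4 \<Lambda> n"
  have E1nn: "E1 \<ge> 0" and E2nn: "E2 \<ge> 0" using apos' L0
    by (auto simp: E1_def E2_def bE1_def bE2_def a_def[symmetric])
  have E3nn: "E3 \<ge> 0" and E4nn: "E4 \<ge> 0" using E1nn E2nn apos'
    by (auto simp: E3_def E4_def bE3_def bE4_def a_def[symmetric] E1_def[symmetric] E2_def[symmetric])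
  have sL: "(\<Sum>i\<in>I. (L i)^2) = D * Q"
    unfolding L_def D_def Qdef by (rule sumL_identity[OF A])
  have sT: "(\<Sum>i\<in>I. T i) = 2 * D"
    unfolding T_def D_def by (rule sumT_identity[OF A])
  have WL: "\<bar>W - 4 * D * Q\<bar> \<le> E1 * \<rho>^3"
  proof -
    have "W - 4 * D * Q = (\<Sum>i\<in>I. (Qd i)^2 - 4 * (L i)^2)"
      unfolding W_def sum_subtractf by (simp add: sum_distrib_left[symmetric] sL)
    also have "\<bar>\<dots>\<bar> \<le> real n * (10 * a * \<Lambda>^2 * \<rho>^3)"
      by (rule sum_abs_bound[OF cardI]) (rule RLb)
    also have "\<dots> = E1 * \<rho>^3" unfolding E1_def bE1_def a_def by simp
    finally show ?thesis .
  qed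
  have TS: "\<bar>Ts - 4 * D\<bar> \<le> E2 * \<rho>"
  proof -
    have "Ts = (\<Sum>i\<in>I. 2 * T i + S i)" unfolding Ts_def S_def by simp
    also have "\<dots> = 4 * D + (\<Sum>i\<in>I. S i)" by (simp add: sum.distrib sum_distrib_left[symmetric] sT)
    finally have "Ts - 4 * D = (\<Sum>i\<in>I. S i)" by simp
    also have "\<bar>\<dots>\<bar> \<le> real n * (14 * a * \<Lambda> * \<rho>)"
      by (rule sum_abs_bound[OF cardI]) (rule Sb)
    also have "\<dots> = E2 * \<rho>" unfolding E2_def bE2_def a_def by simp
    finally show ?thesis .
  qed
  have QTb: "\<bar>Q * (Ts - 4 * D)\<bar> \<le> (a * \<rho>^2) * (E2 * \<rho>)"
    using Qup Qnn TS by (intro abs_mul_le) auto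
  have r3: "(a * \<rho>^2) * (E2 * \<rho>) = a * E2 * \<rho>^3" by (simp add: power2_eq_square power3_eq_cube)
  have Xb: "W - Q * Ts \<le> E3 * \<rho>^3"
  proof -
    have "W - Q * Ts = (W - 4 * D * Q) - Q * (Ts - 4 * D)" by (simp add: algebra_simps)
    moreover have "E3 * \<rho>^3 = E1 * \<rho>^3 + a * E2 * \<rho>^3"
      unfolding E3_def bE3_def E1_def E2_def a_def by (simp add: algebra_simps)
    ultimately show ?thesis using WL QTb r3 by (simp only: abs_le_iff) linarith
  qed
  have Yb: "2 * Q * Ts - W \<ge> 4 * D * Q - E4 * \<rho>^3"
  proof -
    have "2 * Q * Ts - W = 4 * D * Q + 2 * (Q * (Ts - 4 * D)) - (W - 4 * D * Q)" by (simp add: algebra_simps)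
    moreover have "E4 * \<rho>^3 = 2 * (a * E2 * \<rho>^3) + E1 * \<rho>^3"
      unfolding E4_def bE4_def E1_def E2_def a_def by (simp add: algebra_simps)
    ultimately show ?thesis using WL QTb r3 by (simp only: abs_le_iff) linarith
  qed
  define sq where "sq = sqrt Q"
  have sqpos: "sq > 0" using Qpos by (simp add: sq_def)
  have sqsq: "sq * sq = Q" using Qnn by (simp add: sq_def)
  have sumeq: "(\<Sum>i\<in>I. - Qdd i / Q + (Qd i)^2 / Q^2 - K * (Qdd i / (2 * sqrt Q) - (Qd i)^2 / (4 * Q * sqrt Q)))
     = (W - Q * Ts) / Q^2 - K * ((2 * Q * Ts - W) / (4 * Q * sq))"
  proof -
    have "(\<Sum>i\<in>I. - Qdd i / Q + (Qd i)^2 / Q^2 - K * (Qdd i / (2 * sqrt Q) - (Qd i)^2 / (4 * Q * sqrt Q)))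
      = - Ts / Q + W / Q^2 - K * (Ts / (2 * sq) - W / (4 * Q * sq))"
      unfolding Ts_def W_def sq_def
      by (simp add: sum.distrib sum_subtractf sum_distrib_left[symmetric] sum_divide_distrib[symmetric] sum_negf)
    also have "\<dots> = (W - Q * Ts) / Q^2 - K * ((2 * Q * Ts - W) / (4 * Q * sq))"
      using Qpos sqpos sqsq by (simp add: field_simps power2_eq_square)
    finally show ?thesis .
  qed
  have Knn: "K \<ge> 0" unfolding Kdef bK_def using E3nn d0 cpos apos'
    by (simp add: E3_def c_def a_def[symmetric] divide_nonneg_pos)
  have t1: "(W - Q * Ts) / Q^2 \<le> E3 / (c^2 * \<rho>)"
  proof -
    have "(W - Q * Ts) / Q^2 \<le> E3 * \<rho>^3 / Q^2" using Xb Qpos by (simp add: divide_right_mono)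
    also have "\<dots> \<le> E3 * \<rho>^3 / (c * \<rho>^2)^2"
    proof (rule divide_left_mono)
      show "(c * \<rho>^2)^2 \<le> Q^2" using Qlow cpos \<rho>pos by (intro power_mono) auto
      show "0 \<le> E3 * \<rho>^3" using E3nn \<rho>pos by simp
      show "0 < Q^2 * (c * \<rho>^2)^2" using Qpos cpos \<rho>pos by simp
    qed
    also have "\<dots> = E3 / (c^2 * \<rho>)" using cpos \<rho>pos by (simp add: field_simps power2_eq_square power3_eq_cube)
    finally show ?thesis .
  qed
  have squp: "sq \<le> sqrt a * \<rho>"
  proof -
    have "sq \<le> sqrt (a * \<rho>^2)" unfolding sq_def using Qup by simp
    also have "\<dots> = sqrt a * \<rho>" using \<rho>pos by (simp add: real_sqrt_mult)
    finally show ?thesis .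
  qed
  have sqlow: "sqrt c * \<rho> \<le> sq"
  proof -
    have "sqrt c * \<rho> = sqrt (c * \<rho>^2)" using \<rho>pos by (simp add: real_sqrt_mult)
    also have "\<dots> \<le> sq" unfolding sq_def using Qlow by simp
    finally show ?thesis .
  qed
  have t2: "D / sq \<ge> d0 / (sqrt a * \<rho>)"
  proof -
    have "d0 / (sqrt a * \<rho>) \<le> d0 / sq" using squp sqpos d0 by (intro divide_left_mono) auto
    also have "\<dots> \<le> D / sq" using Dpos sqpos by (simp add: divide_right_mono)
    finally show ?thesis .
  qed
  have t3: "\<rho>^3 / (Q * sq) \<le> 1 / (c * sqrt c)"
  proof -
    have "(c * \<rho>^2) * (sqrt c * \<rho>) \<le> Q * sq" using Qlow sqlow cpos \<rho>pos Qnn by (intro mult_mono) auto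
    moreover have "(c * \<rho>^2) * (sqrt c * \<rho>) = (c * sqrt c) * \<rho>^3" by (simp add: power2_eq_square power3_eq_cube)
    ultimately have "(c * sqrt c) * \<rho>^3 \<le> Q * sq" by simp
    then show ?thesis using cpos \<rho>pos Qpos sqpos by (simp add: field_simps)
  qed
  have t4: "K * ((2 * Q * Ts - W) / (4 * Q * sq)) \<ge> K * (d0 / (sqrt a * \<rho>)) - K * E4 / (4 * c * sqrt c)"
  proof -
    have "(2 * Q * Ts - W) / (4 * Q * sq) \<ge> (4 * D * Q - E4 * \<rho>^3) / (4 * Q * sq)"
      using Yb Qpos sqpos by (simp add: divide_right_mono)
    moreover have "(4 * D * Q - E4 * \<rho>^3) / (4 * Q * sq) = D / sq - E4 / 4 * (\<rho>^3 / (Q * sq))"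
      using Qpos sqpos by (simp add: field_simps)
    moreover have "E4 / 4 * (\<rho>^3 / (Q * sq)) \<le> E4 / 4 * (1 / (c * sqrt c))"
      using t3 E4nn by (intro mult_left_mono) auto
    ultimately have "(2 * Q * Ts - W) / (4 * Q * sq) \<ge> d0 / (sqrt a * \<rho>) - E4 / (4 * c * sqrt c)"
      using t2 by simp
    then have "K * ((2 * Q * Ts - W) / (4 * Q * sq)) \<ge> K * (d0 / (sqrt a * \<rho>) - E4 / (4 * c * sqrt c))"
      using Knn by (rule mult_left_mono)
    then show ?thesis by (simp add: right_diff_distrib)
  qed
  have t5: "K * (d0 / (sqrt a * \<rho>)) = E3 / (c^2 * \<rho>)"
    unfolding Kdef bK_def using d0 apos' cpos \<rho>pos
    by (simp add: E3_def[symmetric] c_def[symmetric] a_def[symmetric] field_simps)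
  have CGeq: "bCG \<Lambda> d0 n = K * E4 / (4 * c * sqrt c)"
    unfolding bCG_def Kdef E4_def c_def ..
  show ?thesis
    using sumeq t1 t4 t5 CGeq Qpos by linarith
qed

lemma Ck_on_Suc_partial_diff:
  assumes "Ck_on (Suc (Suc k)) U g" "e \<in> Basis" "x \<in> U"
  shows "partial g e differentiable (at x)"
  using assms by (simp add: partial_def[abs_def])

lemma Ck3_facts:
  assumes "Ck_on 3 U g" "e \<in> Basis" "i \<in> Basis" "x \<in> U"
  shows "g differentiable (at x)" "partial g e differentiable (at x)"
    "partial (partial g e) i differentiable (at x)"
    "continuous_on U g" "continuous_on U (partial g e)" "continuous_on U (partial (partial g e) i)"
    "continuous_on U (partial (partial (partial g e) i) i)"
proof -
  have c3: "Ck_on (Suc (Suc (Suc 0))) U g" using assms(1) by (simp add: numeral_3_eq_3)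
  have c2: "Ck_on 2 U (partial g e)" using Ck_on_partial[of 2 U g e] c3 assms by (simp add: numeral_3_eq_3 numeral_2_eq_2)
  have c1: "Ck_on 1 U (partial (partial g e) i)" using Ck_on_partial[of 1 U "partial g e" i] c2 assms by (simp add: numeral_2_eq_2)
  have c0: "Ck_on 0 U (partial (partial (partial g e) i) i)" using Ck_on_partial[of 0 U "partial (partial g e) i" i] c1 assms by simp
  show "g differentiable (at x)" using c3 assms by simp
  show "partial g e differentiable (at x)" using c2 assms by (simp add: numeral_2_eq_2)
  show "partial (partial g e) i differentiable (at x)" using c1 assms by simp
  show "continuous_on U g" using c3 Ck_on_cont by blast
  show "continuous_on U (partial g e)" using c2 Ck_on_cont by blast
  show "continuous_on U (partial (partial g e) i)" using c1 Ck_on_cont by blast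
  show "continuous_on U (partial (partial (partial g e) i) i)" using c0 by simp
qed

lemma Ck3_d0: "Ck_on 3 U (g::'a::euclidean_space \<Rightarrow> real) \<Longrightarrow> x \<in> U \<Longrightarrow> g differentiable (at x)"
  using Ck3_facts(1)[of U g "SOME b. b \<in> Basis" "SOME b. b \<in> Basis"] by (metis SOME_Basis)
lemma Ck3_d1: "Ck_on 3 U g \<Longrightarrow> e \<in> Basis \<Longrightarrow> x \<in> U \<Longrightarrow> partial g e differentiable (at x)"
  using Ck3_facts(2)[of U g e e] by metis
lemma Ck3_d2: "Ck_on 3 U g \<Longrightarrow> e \<in> Basis \<Longrightarrow> i \<in> Basis \<Longrightarrow> x \<in> U \<Longrightarrow> partial (partial g e) i differentiable (at x)"
  using Ck3_facts(3)[of U g e i] by metis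

definition "gA g h y = (\<Sum>e\<in>Basis. partial g e y * partial h e y)"
definition "gA' g h i y = (\<Sum>e\<in>Basis. partial (partial g e) i y * partial h e y + partial g e y * partial (partial h e) i y)"
definition "gA'' g h i y = (\<Sum>e\<in>Basis. partial (partial (partial g e) i) i y * partial h e y
    + 2 * (partial (partial g e) i y * partial (partial h e) i y) + partial g e y * partial (partial (partial h e) i) i y)"

lemma gA_deriv:
  assumes "Ck_on 3 U g" "Ck_on 3 U h" "i \<in> Basis" "y + t *\<^sub>R i \<in> U"
  shows "((\<lambda>s. gA g h (y + s *\<^sub>R i)) has_real_derivative gA' g h i (y + t *\<^sub>R i)) (at t)"
  unfolding gA_def gA'_def
  apply (rule DERIV_sum)
  apply (rule derivative_eq_intros line_deriv Ck3_d0[OF assms(1)] Ck3_d1[OF assms(1)] Ck3_d2[OF assms(1)] Ck3_d0[OF assms(2)] Ck3_d1[OF assms(2)] Ck3_d2[OF assms(2)] | assumption | simp add: assms)+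
  done

lemma gA'_deriv:
  assumes "Ck_on 3 U g" "Ck_on 3 U h" "i \<in> Basis" "y + t *\<^sub>R i \<in> U"
  shows "((\<lambda>s. gA' g h i (y + s *\<^sub>R i)) has_real_derivative gA'' g h i (y + t *\<^sub>R i)) (at t)"
  unfolding gA'_def gA''_def
  apply (rule DERIV_sum)
  apply (rule derivative_eq_intros line_deriv Ck3_d0[OF assms(1)] Ck3_d1[OF assms(1)] Ck3_d2[OF assms(1)] Ck3_d0[OF assms(2)] Ck3_d1[OF assms(2)] Ck3_d2[OF assms(2)] | assumption | simp add: assms)+
  done

definition "bQ f1 f2 y = gA f2 f2 y * (f1 y)^2 - 2 * gA f1 f2 y * f1 y * f2 y + gA f1 f1 y * (f2 y)^2"
definition "bQd f1 f2 i y = gA' f2 f2 i y * (f1 y)^2 + 2 * (- gA' f1 f2 i y) * f1 y * f2 y + gA' f1 f1 i y * (f2 y)^2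
   + 2 * ((gA f2 f2 y * f1 y - gA f1 f2 y * f2 y) * partial f1 i y + (gA f1 f1 y * f2 y - gA f1 f2 y * f1 y) * partial f2 i y)"
definition "bQdd f1 f2 i y = gA'' f2 f2 i y * (f1 y)^2 + 2 * (- gA'' f1 f2 i y) * f1 y * f2 y + gA'' f1 f1 i y * (f2 y)^2
   + 4 * (gA' f2 f2 i y * f1 y * partial f1 i y + (- gA' f1 f2 i y) * (partial f1 i y * f2 y + f1 y * partial f2 i y) + gA' f1 f1 i y * f2 y * partial f2 i y)
   + 2 * (gA f2 f2 y * f1 y * partial (partial f1 i) i y - gA f1 f2 y * (partial (partial f1 i) i y * f2 y + f1 y * partial (partial f2 i) i y) + gA f1 f1 y * f2 y * partial (partial f2 i) i y)
   + 2 * (gA f2 f2 y * (partial f1 i y * partial f1 i y) - 2 * gA f1 f2 y * (partial f1 i y * partial f2 i y) + gA f1 f1 y * (partial f2 i y * partial f2 i y))"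

lemma bQ_deriv:
  assumes "Ck_on 3 U f1" "Ck_on 3 U f2" "i \<in> Basis" "y + t *\<^sub>R i \<in> U"
  shows "((\<lambda>s. bQ f1 f2 (y + s *\<^sub>R i)) has_real_derivative bQd f1 f2 i (y + t *\<^sub>R i)) (at t)"
  unfolding bQ_def bQd_def
  apply (rule derivative_eq_intros gA_deriv[OF assms(1) assms(1)] gA_deriv[OF assms(1) assms(2)] gA_deriv[OF assms(2) assms(2)]
     line_deriv Ck3_d0[OF assms(1)] Ck3_d1[OF assms(1)] Ck3_d2[OF assms(1)] Ck3_d0[OF assms(2)] Ck3_d1[OF assms(2)] Ck3_d2[OF assms(2)] | assumption | simp add: assms)+
  apply (simp add: algebra_simps power2_eq_square)
  done

lemma bQd_deriv:
  assumes "Ck_on 3 U f1" "Ck_on 3 U f2" "i \<in> Basis" "y + t *\<^sub>R i \<in> U"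
  shows "((\<lambda>s. bQd f1 f2 i (y + s *\<^sub>R i)) has_real_derivative bQdd f1 f2 i (y + t *\<^sub>R i)) (at t)"
  unfolding bQd_def bQdd_def
  apply (rule derivative_eq_intros gA_deriv[OF assms(1) assms(1)] gA_deriv[OF assms(1) assms(2)] gA_deriv[OF assms(2) assms(2)]
     gA'_deriv[OF assms(1) assms(1)] gA'_deriv[OF assms(1) assms(2)] gA'_deriv[OF assms(2) assms(2)]
     line_deriv Ck3_d0[OF assms(1)] Ck3_d1[OF assms(1)] Ck3_d2[OF assms(1)] Ck3_d0[OF assms(2)] Ck3_d1[OF assms(2)] Ck3_d2[OF assms(2)] | assumption | simp add: assms)+
  apply (simp add: algebra_simps power2_eq_square)
  done

definition "bG K f1 f2 y = - ln (bQ f1 f2 y) - K * sqrt (bQ f1 f2 y)"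
definition "bG1 K f1 f2 i y = - bQd f1 f2 i y / bQ f1 f2 y - K * (bQd f1 f2 i y / (2 * sqrt (bQ f1 f2 y)))"
definition "bG2 K f1 f2 i y = - bQdd f1 f2 i y / bQ f1 f2 y + (bQd f1 f2 i y)^2 / (bQ f1 f2 y)^2
   - K * (bQdd f1 f2 i y / (2 * sqrt (bQ f1 f2 y)) - (bQd f1 f2 i y)^2 / (4 * bQ f1 f2 y * sqrt (bQ f1 f2 y)))"

lemma bG_deriv:
  assumes "Ck_on 3 U f1" "Ck_on 3 U f2" "i \<in> Basis" "y + t *\<^sub>R i \<in> U" "bQ f1 f2 (y + t *\<^sub>R i) > 0"
  shows "((\<lambda>s. bG K f1 f2 (y + s *\<^sub>R i)) has_real_derivative bG1 K f1 f2 i (y + t *\<^sub>R i)) (at t)"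
  unfolding bG_def bG1_def
  by (rule G1_generic) (rule bQ_deriv[OF assms(1-4)] assms(5))+

lemma bG1_deriv:
  assumes "Ck_on 3 U f1" "Ck_on 3 U f2" "i \<in> Basis" "y + t *\<^sub>R i \<in> U" "bQ f1 f2 (y + t *\<^sub>R i) > 0"
  shows "((\<lambda>s. bG1 K f1 f2 i (y + s *\<^sub>R i)) has_real_derivative bG2 K f1 f2 i (y + t *\<^sub>R i)) (at t)"
  unfolding bG1_def bG2_def
  by (rule G2_generic) (rule bQ_deriv[OF assms(1-4)] bQd_deriv[OF assms(1-4)] assms(5))+

lemma bG2_sum_bound:
  fixes f1 f2 :: "'a::euclidean_space \<Rightarrow> real"
  assumes L1: "1 \<le> \<Lambda>"
    and bf: "\<bar>f1 y\<bar> \<le> \<Lambda>" "\<bar>f2 y\<bar> \<le> \<Lambda>"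
    and bp: "\<And>i. i \<in> Basis \<Longrightarrow> \<bar>partial f1 i y\<bar> \<le> \<Lambda> \<and> \<bar>partial f2 i y\<bar> \<le> \<Lambda>
        \<and> \<bar>partial (partial f1 i) i y\<bar> \<le> \<Lambda> \<and> \<bar>partial (partial f2 i) i y\<bar> \<le> \<Lambda>"
    and bn: "\<And>i. i \<in> Basis \<Longrightarrow> \<bar>gA' f2 f2 i y\<bar> \<le> \<Lambda> \<and> \<bar>gA' f1 f2 i y\<bar> \<le> \<Lambda> \<and> \<bar>gA' f1 f1 i y\<bar> \<le> \<Lambda>
        \<and> \<bar>gA'' f2 f2 i y\<bar> \<le> \<Lambda> \<and> \<bar>gA'' f1 f2 i y\<bar> \<le> \<Lambda> \<and> \<bar>gA'' f1 f1 i y\<bar> \<le> \<Lambda>"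
    and d0: "0 < d0" "d0 \<le> gA f1 f1 y * gA f2 f2 y - (gA f1 f2 y)^2"
    and nz: "f1 y \<noteq> 0 \<or> f2 y \<noteq> 0"
  shows "bQ f1 f2 y > 0 \<and> (\<Sum>i\<in>Basis. bG2 (bK \<Lambda> d0 DIM('a)) f1 f2 i y) \<le> bCG \<Lambda> d0 DIM('a)"
  unfolding bG2_def
  apply (rule barrier_estimate[where I=Basis and n="DIM('a)" and \<Lambda>=\<Lambda> and ?f1.0="f1 y" and ?f2.0="f2 y"
      and ?p1.0="\<lambda>i. partial f1 i y" and ?p2.0="\<lambda>i. partial f2 i y"
      and ?h1.0="\<lambda>i. partial (partial f1 i) i y" and ?h2.0="\<lambda>i. partial (partial f2 i) i y"
      and ?n11.0="\<lambda>i. gA' f2 f2 i y" and ?n12.0="\<lambda>i. - gA' f1 f2 i y" and ?n22.0="\<lambda>i. gA' f1 f1 i y"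
      and ?nn11.0="\<lambda>i. gA'' f2 f2 i y" and ?nn12.0="\<lambda>i. - gA'' f1 f2 i y" and ?nn22.0="\<lambda>i. gA'' f1 f1 i y"
      and ?A11.0="gA f1 f1 y" and ?A12.0="gA f1 f2 y" and ?A22.0="gA f2 f2 y" and ?d0.0=d0])
  using assms apply (simp_all add: gA_def bQ_def bQd_def bQdd_def)
  done

lemma span_Basis_zero:
  assumes "x \<in> span B" "a \<in> Basis" "a \<notin> B" "B \<subseteq> Basis"
  shows "x \<bullet> a = 0"
proof -
  have "orthogonal a x"
  proof (rule orthogonal_to_span[OF assms(1)])
    fix y assume y: "y \<in> B"
    then have "y \<in> Basis" "a \<noteq> y" using assms by auto
    then show "orthogonal a y" using assms(2) by (simp add: orthogonal_def inner_not_same_Basis)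
  qed
  then show ?thesis by (simp add: orthogonal_def inner_commute)
qed

lemma two_outside:
  assumes "B \<subseteq> (Basis :: 'a::euclidean_space set)" "card B + 2 \<le> DIM('a)"
  obtains a b where "a \<in> Basis" "b \<in> Basis" "a \<notin> B" "b \<notin> B" "a \<noteq> b"
proof -
  have fB: "finite B" using assms(1) finite_subset finite_Basis by blast
  have "card (Basis - B) = DIM('a) - card B" using card_Diff_subset[OF fB assms(1)] .
  then have c: "card (Basis - B) \<ge> 2" using assms(2) by linarith
  have "Basis - B \<noteq> {}" using c by (intro notI) simp
  then obtain a where a: "a \<in> Basis - B" by blast
  have "card (Basis - B - {a}) = card (Basis - B) - 1" using a by (simp add: card_Diff_singleton)
  then have "card (Basis - B - {a}) \<ge> 1" using c by linarith
  then have "Basis - B - {a} \<noteq> {}" by (intro notI) simp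
  then obtain b where b: "b \<in> Basis - B - {a}" by blast
  show ?thesis using that a b by blast
qed

lemma diffeo_det_pos:
  fixes \<phi> :: "'a::euclidean_space \<Rightarrow> 'a"
  assumes sd: "smooth_diffeo U V \<phi>" and pU: "p \<in> U" and ab: "a \<in> Basis" "b \<in> Basis" "a \<noteq> b"
  defines "f1 \<equiv> \<lambda>x. \<phi> x \<bullet> a" and "f2 \<equiv> \<lambda>x. \<phi> x \<bullet> b"
  shows "gA f1 f1 p * gA f2 f2 p - (gA f1 f2 p)^2 > 0"
proof -
  obtain \<psi> where oU: "open U" and oV: "open V" and sm: "smooth_on U \<phi>" and im: "\<phi> ` U = V"
    and sp: "smooth_on V \<psi>" and inv1: "\<forall>x\<in>U. \<psi> (\<phi> x) = x"
    using sd unfolding smooth_diffeo_def by blast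
  have c1: "Ck_on 1 U \<phi>" using sm unfolding smooth_on_def by blast
  have dphi: "\<phi> differentiable (at p)" using c1 pU by simp
  have pV: "\<phi> p \<in> V" using im pU by blast
  have "Ck_on (Suc 0) V \<psi>" using sp unfolding smooth_on_def by blast
  then have dpsi: "\<psi> differentiable (at (\<phi> p))" using pV by simp
  define D\<phi> where "D\<phi> = frechet_derivative \<phi> (at p)"
  define D\<psi> where "D\<psi> = frechet_derivative \<psi> (at (\<phi> p))"
  have h\<phi>: "(\<phi> has_derivative D\<phi>) (at p)" using dphi by (simp add: D\<phi>_def frechet_derivative_works)
  have h\<psi>: "(\<psi> has_derivative D\<psi>) (at (\<phi> p))" using dpsi by (simp add: D\<psi>_def frechet_derivative_works)
  have comp: "((\<lambda>x. \<psi> (\<phi> x)) has_derivative (\<lambda>h. D\<psi> (D\<phi> h))) (at p)"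
    using has_derivative_compose[OF h\<phi> h\<psi>] by (simp add: o_def)
  have idd: "((\<lambda>x. \<psi> (\<phi> x)) has_derivative (\<lambda>h. h)) (at p)"
    by (rule has_derivative_transform_within_open[OF has_derivative_ident oU pU]) (use inv1 in auto)
  have DD: "(\<lambda>h. D\<psi> (D\<phi> h)) = (\<lambda>h. h)" using has_derivative_unique[OF comp idd] .
  have lin: "linear D\<phi>" using h\<phi> has_derivative_linear by blast
  have injD: "inj D\<phi>"
  proof (rule injI)
    fix x y assume "D\<phi> x = D\<phi> y"
    then have "D\<psi> (D\<phi> x) = D\<psi> (D\<phi> y)" by simp
    then show "x = y" using fun_cong[OF DD, of x] fun_cong[OF DD, of y] by simp
  qed
  have surjD: "surj D\<phi>" using linear_injective_imp_surjective[OF lin injD] by simp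
  obtain y1 where y1: "D\<phi> y1 = a" using surjD unfolding surj_def by metis
  obtain y2 where y2: "D\<phi> y2 = b" using surjD unfolding surj_def by metis
  have pf1: "partial f1 e p = D\<phi> e \<bullet> a" for e unfolding f1_def D\<phi>_def by (rule partial_inner[OF dphi])
  have pf2: "partial f2 e p = D\<phi> e \<bullet> b" for e unfolding f2_def D\<phi>_def by (rule partial_inner[OF dphi])
  define g1 where "g1 = (\<Sum>e\<in>Basis. partial f1 e p *\<^sub>R e)"
  define g2 where "g2 = (\<Sum>e\<in>Basis. partial f2 e p *\<^sub>R e)"
  have g1e: "g1 \<bullet> e = partial f1 e p" if "e \<in> Basis" for e unfolding g1_def using that by (rule inner_sum_left_Basis)
  have g2e: "g2 \<bullet> e = partial f2 e p" if "e \<in> Basis" for e unfolding g2_def using that by (rule inner_sum_left_Basis)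
  have A11: "gA f1 f1 p = g1 \<bullet> g1" unfolding gA_def euclidean_inner[of g1 g1] by (simp add: g1e)
  have A12: "gA f1 f2 p = g1 \<bullet> g2" unfolding gA_def euclidean_inner[of g1 g2] by (simp add: g1e g2e)
  have A22: "gA f2 f2 p = g2 \<bullet> g2" unfolding gA_def euclidean_inner[of g2 g2] by (simp add: g2e)
  have yg: "y \<bullet> g1 = D\<phi> y \<bullet> a" "y \<bullet> g2 = D\<phi> y \<bullet> b" for y
  proof -
    have Dy: "D\<phi> y = (\<Sum>e\<in>Basis. (y \<bullet> e) *\<^sub>R D\<phi> e)"
      using linear_sum[OF lin, of "\<lambda>e. (y \<bullet> e) *\<^sub>R e" Basis] linear_cmul[OF lin]
      by (simp add: euclidean_representation)
    show "y \<bullet> g1 = D\<phi> y \<bullet> a"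
      unfolding Dy euclidean_inner[of y g1] by (simp add: g1e pf1 inner_sum_left)
    show "y \<bullet> g2 = D\<phi> y \<bullet> b"
      unfolding Dy euclidean_inner[of y g2] by (simp add: g2e pf2 inner_sum_left)
  qed
  have v11: "y1 \<bullet> g1 = 1" using yg(1)[of y1] y1 ab by simp
  have v12: "y1 \<bullet> g2 = 0" using yg(2)[of y1] y1 ab by (simp add: inner_not_same_Basis)
  have v22: "y2 \<bullet> g2 = 1" using yg(2)[of y2] y2 ab by simp
  have cs: "\<bar>g1 \<bullet> g2\<bar> \<le> norm g1 * norm g2" by (rule Cauchy_Schwarz_ineq2)
  have ne: "\<bar>g1 \<bullet> g2\<bar> \<noteq> norm g1 * norm g2"
  proof
    assume "\<bar>g1 \<bullet> g2\<bar> = norm g1 * norm g2"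
    then have "norm g1 *\<^sub>R g2 = norm g2 *\<^sub>R g1 \<or> norm g1 *\<^sub>R g2 = - norm g2 *\<^sub>R g1"
      by (simp add: norm_cauchy_schwarz_abs_eq)
    then have "norm g2 = 0"
    proof (elim disjE)
      assume h: "norm g1 *\<^sub>R g2 = norm g2 *\<^sub>R g1"
      have "y1 \<bullet> (norm g1 *\<^sub>R g2) = y1 \<bullet> (norm g2 *\<^sub>R g1)" using h by simp
      then show ?thesis using v11 v12 by simp
    next
      assume h: "norm g1 *\<^sub>R g2 = - norm g2 *\<^sub>R g1"
      have "y1 \<bullet> (norm g1 *\<^sub>R g2) = y1 \<bullet> (- norm g2 *\<^sub>R g1)" using h by simp
      then show ?thesis using v11 v12 by simp
    qed
    then have "g2 = 0" by simp
    then show False using v22 by simp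
  qed
  have "\<bar>g1 \<bullet> g2\<bar> < norm g1 * norm g2" using cs ne by simp
  then have "(g1 \<bullet> g2)^2 < (norm g1 * norm g2)^2"
  proof -
    assume h: "\<bar>g1 \<bullet> g2\<bar> < norm g1 * norm g2"
    have "\<bar>g1 \<bullet> g2\<bar>^2 < (norm g1 * norm g2)^2" by (rule power_strict_mono[OF h]) auto
    then show ?thesis by simp
  qed
  then show ?thesis unfolding A11 A12 A22
    by (simp add: power_mult_distrib power2_norm_eq_inner)
qed

lemma Ck3_cont:
  assumes "Ck_on 3 U (g::'a::euclidean_space \<Rightarrow> real)" "e \<in> Basis" "i \<in> Basis"
  shows "continuous_on U g" "continuous_on U (partial g e)" "continuous_on U (partial (partial g e) i)"
    "continuous_on U (partial (partial (partial g e) i) i)"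
proof -
  have c3: "Ck_on (Suc (Suc (Suc 0))) U g" using assms(1) by (simp add: numeral_3_eq_3)
  have c2: "Ck_on 2 U (partial g e)" using Ck_on_partial[of 2 U g e] c3 assms by (simp add: numeral_3_eq_3 numeral_2_eq_2)
  have c1: "Ck_on 1 U (partial (partial g e) i)" using Ck_on_partial[of 1 U "partial g e" i] c2 assms by (simp add: numeral_2_eq_2)
  have c0: "Ck_on 0 U (partial (partial (partial g e) i) i)" using Ck_on_partial[of 0 U "partial (partial g e) i" i] c1 assms by simp
  show "continuous_on U g" using c3 Ck_on_cont by blast
  show "continuous_on U (partial g e)" using c2 Ck_on_cont by blast
  show "continuous_on U (partial (partial g e) i)" using c1 Ck_on_cont by blast
  show "continuous_on U (partial (partial (partial g e) i) i)" using c0 by simp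
qed

lemma cont_bound:
  fixes F :: "'a::euclidean_space \<Rightarrow> real"
  assumes "continuous_on U F" "compact C" "C \<subseteq> U"
  shows "\<exists>B. \<forall>x\<in>C. \<bar>F x\<bar> \<le> B"
proof -
  have "compact (F ` C)" using assms by (meson compact_continuous_image continuous_on_subset)
  then have "bounded (F ` C)" by (rule compact_imp_bounded)
  then obtain B where "\<forall>y\<in>F ` C. norm y \<le> B" unfolding bounded_iff by blast
  then show ?thesis by auto
qed

lemma finite_bound:
  fixes F :: "'j \<Rightarrow> 'x \<Rightarrow> real"
  assumes "finite I" "\<And>j. j \<in> I \<Longrightarrow> \<exists>B. \<forall>x\<in>C. \<bar>F j x\<bar> \<le> B"
  shows "\<exists>B\<ge>0. \<forall>j\<in>I. \<forall>x\<in>C. \<bar>F j x\<bar> \<le> B"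
proof -
  obtain Bf where Bf: "\<And>j. j \<in> I \<Longrightarrow> \<forall>x\<in>C. \<bar>F j x\<bar> \<le> Bf j" using assms(2) by metis
  have "\<forall>j\<in>I. \<forall>x\<in>C. \<bar>F j x\<bar> \<le> (\<Sum>k\<in>I. \<bar>Bf k\<bar>)"
  proof (intro ballI)
    fix j x assume j: "j \<in> I" and x: "x \<in> C"
    have "\<bar>F j x\<bar> \<le> \<bar>Bf j\<bar>" using Bf[OF j] x by force
    also have "\<dots> \<le> (\<Sum>k\<in>I. \<bar>Bf k\<bar>)" using member_le_sum[of j I "\<lambda>k. \<bar>Bf k\<bar>"] j assms(1) by simp
    finally show "\<bar>F j x\<bar> \<le> (\<Sum>k\<in>I. \<bar>Bf k\<bar>)" .
  qed
  moreover have "(\<Sum>k\<in>I. \<bar>Bf k\<bar>) \<ge> 0" by (simp add: sum_nonneg)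
  ultimately show ?thesis by blast
qed

lemma Ck3_bounds:
  fixes g :: "'a::euclidean_space \<Rightarrow> real"
  assumes "Ck_on 3 U g" "compact C" "C \<subseteq> U"
  shows "\<exists>B\<ge>0. \<forall>x\<in>C. \<bar>g x\<bar> \<le> B \<and> (\<forall>e\<in>Basis. \<forall>i\<in>Basis. \<bar>partial g e x\<bar> \<le> B
     \<and> \<bar>partial (partial g e) i x\<bar> \<le> B \<and> \<bar>partial (partial (partial g e) i) i x\<bar> \<le> B)"
proof -
  obtain b0 where b0: "b0 \<in> (Basis::'a set)" using nonempty_Basis by blast
  define F where "F = (\<lambda>(k::nat, e::'a, i::'a). if k = 0 then g else if k = 1 then partial g e
      else if k = 2 then partial (partial g e) i else partial (partial (partial g e) i) i)"
  have "\<exists>B\<ge>0. \<forall>j\<in>{0..3::nat} \<times> (Basis::'a set) \<times> (Basis::'a set). \<forall>x\<in>C. \<bar>F j x\<bar> \<le> B"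
  proof (rule finite_bound)
    show "finite ({0..3::nat} \<times> (Basis::'a set) \<times> (Basis::'a set))" by simp
    fix j assume j: "j \<in> {0..3::nat} \<times> (Basis::'a set) \<times> (Basis::'a set)"
    then obtain k e i where kei: "j = (k, e, i)" "k \<le> 3" "e \<in> Basis" "i \<in> Basis" by auto
    have "continuous_on U (F j)"
      using Ck3_cont[OF assms(1) kei(3,4)] kei(2) unfolding F_def kei(1)
      by (cases "k = 0"; cases "k = 1"; cases "k = 2") (auto intro: b0)
    then show "\<exists>B. \<forall>x\<in>C. \<bar>F j x\<bar> \<le> B" using cont_bound assms(2,3) by blast
  qed
  then obtain B where B: "B \<ge> 0" "\<forall>j\<in>{0..3::nat} \<times> (Basis::'a set) \<times> (Basis::'a set). \<forall>x\<in>C. \<bar>F j x\<bar> \<le> B" by blast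
  show ?thesis
  proof (intro exI[of _ B] conjI ballI B(1))
    fix x assume x: "x \<in> C"
    show "\<bar>g x\<bar> \<le> B" using B(2) x b0 unfolding F_def by (force simp: Ball_def)
    fix e i assume e: "e \<in> (Basis::'a set)" and i: "i \<in> (Basis::'a set)"
    show "\<bar>partial g e x\<bar> \<le> B" using bspec[OF B(2), of "(1, e, i)"] x e i unfolding F_def by auto
    show "\<bar>partial (partial g e) i x\<bar> \<le> B" using bspec[OF B(2), of "(2, e, i)"] x e i unfolding F_def by auto
    show "\<bar>partial (partial (partial g e) i) i x\<bar> \<le> B" using bspec[OF B(2), of "(3, e, i)"] x e i unfolding F_def by auto
  qed
qed

lemma gA_cont:
  assumes "Ck_on 3 U g" "Ck_on 3 U h"
  shows "continuous_on U (gA g h)"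
  unfolding gA_def[abs_def]
  by (intro continuous_on_sum continuous_on_mult) (auto intro: Ck3_cont[OF assms(1)] Ck3_cont[OF assms(2)])

lemma bQ_cont:
  assumes "Ck_on 3 U f1" "Ck_on 3 U f2"
  shows "continuous_on U (bQ f1 f2)"
proof -
  obtain b0 where b0: "b0 \<in> (Basis::'a set)" using nonempty_Basis by blast
  show ?thesis unfolding bQ_def[abs_def]
    by (intro continuous_intros gA_cont assms Ck3_cont(1)[OF assms(1) b0 b0] Ck3_cont(1)[OF assms(2) b0 b0])
qed

lemma gA'_bounds:
  fixes g h :: "'a::euclidean_space \<Rightarrow> real"
  assumes "\<And>e. e \<in> Basis \<Longrightarrow> \<bar>partial g e x\<bar> \<le> B \<and> \<bar>partial (partial g e) i x\<bar> \<le> B \<and> \<bar>partial (partial (partial g e) i) i x\<bar> \<le> B"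
    "\<And>e. e \<in> Basis \<Longrightarrow> \<bar>partial h e x\<bar> \<le> B \<and> \<bar>partial (partial h e) i x\<bar> \<le> B \<and> \<bar>partial (partial (partial h e) i) i x\<bar> \<le> B"
  shows "\<bar>gA' g h i x\<bar> \<le> real DIM('a) * (2 * B^2)" "\<bar>gA'' g h i x\<bar> \<le> real DIM('a) * (4 * B^2)"
proof -
  show "\<bar>gA' g h i x\<bar> \<le> real DIM('a) * (2 * B^2)" unfolding gA'_def
  proof (rule sum_abs_bound)
    fix e :: 'a assume e: "e \<in> Basis"
    have "\<bar>partial (partial g e) i x * partial h e x\<bar> \<le> B * B" "\<bar>partial g e x * partial (partial h e) i x\<bar> \<le> B * B"
      using assms[OF e] by (auto intro: abs_mul_le)
    then show "\<bar>partial (partial g e) i x * partial h e x + partial g e x * partial (partial h e) i x\<bar> \<le> 2 * B^2"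
      by (simp only: abs_le_iff power2_eq_square) linarith
  qed simp
  show "\<bar>gA'' g h i x\<bar> \<le> real DIM('a) * (4 * B^2)" unfolding gA''_def
  proof (rule sum_abs_bound)
    fix e :: 'a assume e: "e \<in> Basis"
    have "\<bar>partial (partial (partial g e) i) i x * partial h e x\<bar> \<le> B * B"
      "\<bar>partial (partial g e) i x * partial (partial h e) i x\<bar> \<le> B * B"
      "\<bar>partial g e x * partial (partial (partial h e) i) i x\<bar> \<le> B * B"
      using assms[OF e] by (auto intro: abs_mul_le)
    then show "\<bar>partial (partial (partial g e) i) i x * partial h e x + 2 * (partial (partial g e) i x * partial (partial h e) i x)
        + partial g e x * partial (partial (partial h e) i) i x\<bar> \<le> 4 * B^2"
      by (simp only: abs_le_iff power2_eq_square) linarith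
  qed simp
qed

definition "goodpt \<Lambda> d0 f1 f2 y \<longleftrightarrow>
   \<bar>f1 y\<bar> \<le> \<Lambda> \<and> \<bar>f2 y\<bar> \<le> \<Lambda> \<and>
   (\<forall>i\<in>Basis. \<bar>partial f1 i y\<bar> \<le> \<Lambda> \<and> \<bar>partial f2 i y\<bar> \<le> \<Lambda>
        \<and> \<bar>partial (partial f1 i) i y\<bar> \<le> \<Lambda> \<and> \<bar>partial (partial f2 i) i y\<bar> \<le> \<Lambda>) \<and>
   (\<forall>i\<in>Basis. \<bar>gA' f2 f2 i y\<bar> \<le> \<Lambda> \<and> \<bar>gA' f1 f2 i y\<bar> \<le> \<Lambda> \<and> \<bar>gA' f1 f1 i y\<bar> \<le> \<Lambda>
        \<and> \<bar>gA'' f2 f2 i y\<bar> \<le> \<Lambda> \<and> \<bar>gA'' f1 f2 i y\<bar> \<le> \<Lambda> \<and> \<bar>gA'' f1 f1 i y\<bar> \<le> \<Lambda>) \<and>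
   d0 \<le> gA f1 f1 y * gA f2 f2 y - (gA f1 f2 y)^2"

lemma barrier_setup:
  fixes \<Omega> \<Sigma> :: "'a::euclidean_space set"
  assumes oO: "open \<Omega>" and sub: "\<Sigma> \<subseteq> \<Omega>" and sm: "smooth_submanifold_codim2 \<Sigma>" and p: "p \<in> \<Sigma>"
  obtains r U f1 f2 \<Lambda> d0 where "r > 0" "open U" "cball p r \<subseteq> U \<inter> \<Omega>" "Ck_on 3 U f1" "Ck_on 3 U f2"
    "\<And>x. x \<in> \<Sigma> \<inter> U \<Longrightarrow> f1 x = 0 \<and> f2 x = 0" "\<Lambda> \<ge> 1" "d0 > 0"
    "\<And>y. y \<in> cball p r \<Longrightarrow> goodpt \<Lambda> d0 f1 f2 y"
proof -
  have "\<exists>U V \<phi> B. p \<in> U \<and> smooth_diffeo U V \<phi> \<and> B \<subseteq> Basis \<and> card B + 2 \<le> DIM('a) \<and>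
        (\<phi> ` (\<Sigma> \<inter> U) = V \<inter> span B \<or> (\<exists>b\<in>B. \<phi> ` (\<Sigma> \<inter> U) = V \<inter> {y\<in>span B. y \<bullet> b \<ge> 0}))"
    using bspec[OF sm[unfolded smooth_submanifold_codim2_def] p] .
  then obtain U V \<phi> B where H: "p \<in> U \<and> smooth_diffeo U V \<phi> \<and> B \<subseteq> Basis \<and> card B + 2 \<le> DIM('a) \<and>
        (\<phi> ` (\<Sigma> \<inter> U) = V \<inter> span B \<or> (\<exists>b\<in>B. \<phi> ` (\<Sigma> \<inter> U) = V \<inter> {y\<in>span B. y \<bullet> b \<ge> 0}))"
    by (elim exE)
  note pU = H[THEN conjunct1] and sd = H[THEN conjunct2, THEN conjunct1]
    and BB = H[THEN conjunct2, THEN conjunct2, THEN conjunct1]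
    and cB = H[THEN conjunct2, THEN conjunct2, THEN conjunct2, THEN conjunct1]
    and ch = H[THEN conjunct2, THEN conjunct2, THEN conjunct2, THEN conjunct2]
  obtain a b where ab: "a \<in> Basis" "b \<in> Basis" "a \<notin> B" "b \<notin> B" "a \<noteq> b"
    using two_outside[OF BB cB] by blast
  have oU: "open U" and smp: "smooth_on U \<phi>" using sd unfolding smooth_diffeo_def by auto
  define f1 where "f1 = (\<lambda>x. \<phi> x \<bullet> a)"
  define f2 where "f2 = (\<lambda>x. \<phi> x \<bullet> b)"
  have c3: "Ck_on 3 U \<phi>" using smp unfolding smooth_on_def by blast
  have F1: "Ck_on 3 U f1" unfolding f1_def by (rule Ck_on_inner[OF oU c3])
  have F2: "Ck_on 3 U f2" unfolding f2_def by (rule Ck_on_inner[OF oU c3])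
  have zero: "f1 x = 0 \<and> f2 x = 0" if "x \<in> \<Sigma> \<inter> U" for x
  proof -
    have im: "\<phi> x \<in> \<phi> ` (\<Sigma> \<inter> U)" using that by (rule imageI)
    have "\<phi> x \<in> span B"
    proof (cases "\<phi> ` (\<Sigma> \<inter> U) = V \<inter> span B")
      case True then show ?thesis using im by simp
    next
      case False
      then obtain b' where "\<phi> ` (\<Sigma> \<inter> U) = V \<inter> {y\<in>span B. y \<bullet> b' \<ge> 0}" using ch by blast
      then show ?thesis using im by simp
    qed
    then show ?thesis unfolding f1_def f2_def using span_Basis_zero[OF _ ab(1,3) BB] span_Basis_zero[OF _ ab(2,4) BB] by simp
  qed
  define D where "D = (\<lambda>y. gA f1 f1 y * gA f2 f2 y - (gA f1 f2 y)^2)"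
  have Dp: "D p > 0" unfolding D_def f1_def f2_def by (rule diffeo_det_pos[OF sd pU ab(1,2,5)])
  have Dc: "continuous_on U D" unfolding D_def
    by (intro continuous_intros gA_cont F1 F2)
  have oUO: "open (U \<inter> \<Omega>)" using oU oO by blast
  have pUO: "p \<in> U \<inter> \<Omega>" using pU p sub by blast
  obtain r0 where r0: "r0 > 0" "ball p r0 \<subseteq> U \<inter> \<Omega>" "\<And>y. y \<in> ball p r0 \<Longrightarrow> D y > D p / 2"
  proof -
    have "isCont D p" using Dc oU pU continuous_on_eq_continuous_at by blast
    then have "\<exists>d>0. \<forall>y. dist y p < d \<longrightarrow> dist (D y) (D p) < D p / 2"
      using Dp unfolding continuous_at_eps_delta by (meson half_gt_zero)
    then obtain s where s: "s > 0" "\<And>y. dist y p < s \<Longrightarrow> dist (D y) (D p) < D p / 2"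
      by blast
    obtain t where t: "t > 0" "ball p t \<subseteq> U \<inter> \<Omega>" using oUO pUO open_contains_ball by blast
    show ?thesis
    proof (rule that[of "min s t"])
      show "min s t > 0" using s t by simp
      show "ball p (min s t) \<subseteq> U \<inter> \<Omega>" using t by auto
      fix y assume "y \<in> ball p (min s t)"
      then have "dist y p < s" by (simp add: dist_commute)
      then have "\<bar>D y - D p\<bar> < D p / 2" using s(2)[of y] by (simp add: dist_real_def)
      then show "D y > D p / 2" by (simp only: abs_less_iff) linarith
    qed
  qed
  define r where "r = r0 / 2"
  have r: "r > 0" "cball p r \<subseteq> ball p r0" using r0 by (auto simp: r_def)
  have cU: "cball p r \<subseteq> U" using r r0 by blast
  obtain B1 where B1: "B1 \<ge> 0" "\<forall>x\<in>cball p r. \<bar>f1 x\<bar> \<le> B1 \<and> (\<forall>e\<in>Basis. \<forall>i\<in>Basis. \<bar>partial f1 e x\<bar> \<le> B1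
     \<and> \<bar>partial (partial f1 e) i x\<bar> \<le> B1 \<and> \<bar>partial (partial (partial f1 e) i) i x\<bar> \<le> B1)"
    using Ck3_bounds[OF F1 compact_cball cU] by blast
  obtain B2 where B2: "B2 \<ge> 0" "\<forall>x\<in>cball p r. \<bar>f2 x\<bar> \<le> B2 \<and> (\<forall>e\<in>Basis. \<forall>i\<in>Basis. \<bar>partial f2 e x\<bar> \<le> B2
     \<and> \<bar>partial (partial f2 e) i x\<bar> \<le> B2 \<and> \<bar>partial (partial (partial f2 e) i) i x\<bar> \<le> B2)"
    using Ck3_bounds[OF F2 compact_cball cU] by blast
  define B0 where "B0 = B1 + B2"
  define \<Lambda> where "\<Lambda> = 1 + B0 + real DIM('a) * (4 * B0^2)"
  have B0: "B0 \<ge> 0" using B1 B2 by (simp add: B0_def)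
  have L1: "\<Lambda> \<ge> 1" using B0 by (simp add: \<Lambda>_def)
  have LB0: "B0 \<le> \<Lambda>" using B0 by (simp add: \<Lambda>_def)
  have L2: "real DIM('a) * (2 * B0^2) \<le> \<Lambda>" "real DIM('a) * (4 * B0^2) \<le> \<Lambda>"
    using B0 by (simp_all add: \<Lambda>_def)
  show ?thesis
  proof (rule that[OF r(1) oU _ F1 F2 zero L1])
    show "cball p r \<subseteq> U \<inter> \<Omega>" using r r0 by blast
    show "D p / 2 > 0" using Dp by simp
    fix y assume y: "y \<in> cball p r"
    have by1: "\<bar>partial f1 e y\<bar> \<le> B0 \<and> \<bar>partial (partial f1 e) i y\<bar> \<le> B0 \<and> \<bar>partial (partial (partial f1 e) i) i y\<bar> \<le> B0"
      if "e \<in> Basis" "i \<in> Basis" for e i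
    proof -
      have "\<bar>partial f1 e y\<bar> \<le> B1 \<and> \<bar>partial (partial f1 e) i y\<bar> \<le> B1 \<and> \<bar>partial (partial (partial f1 e) i) i y\<bar> \<le> B1"
        using B1(2) y that by blast
      then show ?thesis using B2(1) unfolding B0_def by auto
    qed
    have by2: "\<bar>partial f2 e y\<bar> \<le> B0 \<and> \<bar>partial (partial f2 e) i y\<bar> \<le> B0 \<and> \<bar>partial (partial (partial f2 e) i) i y\<bar> \<le> B0"
      if "e \<in> Basis" "i \<in> Basis" for e i
    proof -
      have "\<bar>partial f2 e y\<bar> \<le> B2 \<and> \<bar>partial (partial f2 e) i y\<bar> \<le> B2 \<and> \<bar>partial (partial (partial f2 e) i) i y\<bar> \<le> B2"
        using B2(2) y that by blast
      then show ?thesis using B1(1) unfolding B0_def by auto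
    qed
    have f12: "\<bar>f1 y\<bar> \<le> B0" "\<bar>f2 y\<bar> \<le> B0"
    proof -
      have "\<bar>f1 y\<bar> \<le> B1" "\<bar>f2 y\<bar> \<le> B2" using B1(2) B2(2) y by blast+
      then show "\<bar>f1 y\<bar> \<le> B0" "\<bar>f2 y\<bar> \<le> B0" using B1(1) B2(1) unfolding B0_def by auto
    qed
    show "goodpt \<Lambda> (D p / 2) f1 f2 y" unfolding goodpt_def
    proof (intro conjI ballI)
      show "\<bar>f1 y\<bar> \<le> \<Lambda>" "\<bar>f2 y\<bar> \<le> \<Lambda>" using f12 LB0 by linarith+
      fix i :: 'a assume i: "i \<in> Basis"
      show "\<bar>partial f1 i y\<bar> \<le> \<Lambda>" "\<bar>partial f2 i y\<bar> \<le> \<Lambda>" "\<bar>partial (partial f1 i) i y\<bar> \<le> \<Lambda>"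
        "\<bar>partial (partial f2 i) i y\<bar> \<le> \<Lambda>" using by1[OF i i] by2[OF i i] LB0 by linarith+
      have g1: "\<And>e. e \<in> Basis \<Longrightarrow> \<bar>partial f1 e y\<bar> \<le> B0 \<and> \<bar>partial (partial f1 e) i y\<bar> \<le> B0 \<and> \<bar>partial (partial (partial f1 e) i) i y\<bar> \<le> B0"
        using by1 i by blast
      have g2: "\<And>e. e \<in> Basis \<Longrightarrow> \<bar>partial f2 e y\<bar> \<le> B0 \<and> \<bar>partial (partial f2 e) i y\<bar> \<le> B0 \<and> \<bar>partial (partial (partial f2 e) i) i y\<bar> \<le> B0"
        using by2 i by blast
      show "\<bar>gA' f2 f2 i y\<bar> \<le> \<Lambda>" using gA'_bounds(1)[OF g2 g2] L2 by linarith
      show "\<bar>gA' f1 f2 i y\<bar> \<le> \<Lambda>" using gA'_bounds(1)[OF g1 g2] L2 by linarith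
      show "\<bar>gA' f1 f1 i y\<bar> \<le> \<Lambda>" using gA'_bounds(1)[OF g1 g1] L2 by linarith
      show "\<bar>gA'' f2 f2 i y\<bar> \<le> \<Lambda>" using gA'_bounds(2)[OF g2 g2] L2 by linarith
      show "\<bar>gA'' f1 f2 i y\<bar> \<le> \<Lambda>" using gA'_bounds(2)[OF g1 g2] L2 by linarith
      show "\<bar>gA'' f1 f1 i y\<bar> \<le> \<Lambda>" using gA'_bounds(2)[OF g1 g1] L2 by linarith
    next
      have "y \<in> ball p r0" using r y by blast
      then show "D p / 2 \<le> gA f1 f1 y * gA f2 f2 y - (gA f1 f2 y)^2" using r0(3) unfolding D_def by force
    qed
  qed
qed

lemma bK_nonneg: "\<Lambda> \<ge> 1 \<Longrightarrow> d0 > 0 \<Longrightarrow> bK \<Lambda> d0 n \<ge> 0"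
  unfolding bK_def bE3_def bE1_def bE2_def bc_def ba_def
  by (intro divide_nonneg_pos mult_nonneg_nonneg add_nonneg_nonneg) auto

lemma w_line_deriv1:
  fixes u :: "'a::euclidean_space \<Rightarrow> real"
  assumes "u differentiable (at (y + t *\<^sub>R i))"
    and "((\<lambda>s. G (y + s *\<^sub>R i)) has_real_derivative G1 (y + t *\<^sub>R i)) (at t)"
  shows "((\<lambda>s. u (y + s *\<^sub>R i) + \<beta> \<bullet> (y + s *\<^sub>R i) + \<delta> * ((y + s *\<^sub>R i - p) \<bullet> (y + s *\<^sub>R i - p)) - \<epsilon> * G (y + s *\<^sub>R i))
     has_real_derivative (partial u i (y + t *\<^sub>R i) + \<beta> \<bullet> i + \<delta> * (2 * ((y + t *\<^sub>R i - p) \<bullet> i)) - \<epsilon> * G1 (y + t *\<^sub>R i))) (at t)"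
proof -
  have a: "((\<lambda>s. \<beta> \<bullet> (y + s *\<^sub>R i)) has_real_derivative \<beta> \<bullet> i) (at t)"
  proof -
    have "(\<lambda>s. \<beta> \<bullet> (y + s *\<^sub>R i)) = (\<lambda>s. \<beta> \<bullet> y + s * (\<beta> \<bullet> i))" by (simp add: inner_add_right fun_eq_iff)
    moreover have "((\<lambda>s. \<beta> \<bullet> y + s * (\<beta> \<bullet> i)) has_real_derivative \<beta> \<bullet> i) (at t)"
      by (auto intro!: derivative_eq_intros)
    ultimately show ?thesis by simp
  qed
  have b: "((\<lambda>s. (y + s *\<^sub>R i - p) \<bullet> (y + s *\<^sub>R i - p)) has_real_derivative 2 * ((y + t *\<^sub>R i - p) \<bullet> i)) (at t)"
  proof -
    have "(\<lambda>s. (y + s *\<^sub>R i - p) \<bullet> (y + s *\<^sub>R i - p)) = (\<lambda>s. (y - p) \<bullet> (y - p) + 2 * s * ((y - p) \<bullet> i) + s * s * (i \<bullet> i))"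
      by (simp add: fun_eq_iff algebra_simps inner_add_left inner_add_right inner_diff_left inner_diff_right inner_commute)
    moreover have "((\<lambda>s. (y - p) \<bullet> (y - p) + 2 * s * ((y - p) \<bullet> i) + s * s * (i \<bullet> i)) has_real_derivative
        2 * ((y - p) \<bullet> i) + 2 * t * (i \<bullet> i)) (at t)"
      by (auto intro!: derivative_eq_intros)
    moreover have "2 * ((y - p) \<bullet> i) + 2 * t * (i \<bullet> i) = 2 * ((y + t *\<^sub>R i - p) \<bullet> i)"
      by (simp add: algebra_simps inner_add_left inner_diff_left)
    ultimately show ?thesis by simp
  qed
  show ?thesis
    by (intro DERIV_diff DERIV_add DERIV_cmult line_deriv assms a b)
qed

lemma w_line_deriv2:
  fixes u :: "'a::euclidean_space \<Rightarrow> real"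
  assumes "partial u i differentiable (at y)" "i \<in> Basis"
    and "((\<lambda>s. G1 (y + s *\<^sub>R i)) has_real_derivative G2) (at 0)"
  shows "((\<lambda>s. partial u i (y + s *\<^sub>R i) + \<beta> \<bullet> i + \<delta> * (2 * ((y + s *\<^sub>R i - p) \<bullet> i)) - \<epsilon> * G1 (y + s *\<^sub>R i))
     has_real_derivative (partial (partial u i) i y + 2 * \<delta> - \<epsilon> * G2)) (at 0)"
proof -
  have l: "((\<lambda>s. partial u i (y + s *\<^sub>R i)) has_real_derivative partial (partial u i) i y) (at 0)"
    using line_deriv[of "partial u i" y 0 i] assms(1) by simp
  have b: "((\<lambda>s. 2 * ((y + s *\<^sub>R i - p) \<bullet> i)) has_real_derivative 2) (at 0)"
  proof -
    have "(\<lambda>s. 2 * ((y + s *\<^sub>R i - p) \<bullet> i)) = (\<lambda>s. 2 * ((y - p) \<bullet> i) + 2 * s)"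
      using assms(2) by (simp add: fun_eq_iff algebra_simps inner_add_left inner_diff_left)
    moreover have "((\<lambda>s. 2 * ((y - p) \<bullet> i) + 2 * s) has_real_derivative 2) (at 0)"
      by (auto intro!: derivative_eq_intros)
    ultimately show ?thesis by simp
  qed
  have "((\<lambda>s. partial u i (y + s *\<^sub>R i) + \<beta> \<bullet> i + \<delta> * (2 * ((y + s *\<^sub>R i - p) \<bullet> i)) - \<epsilon> * G1 (y + s *\<^sub>R i))
     has_real_derivative (partial (partial u i) i y + 0 + \<delta> * 2 - \<epsilon> * G2)) (at 0)"
    by (intro DERIV_diff DERIV_add DERIV_cmult l b assms(3) DERIV_const)
  then show ?thesis by (simp add: mult.commute)
qed

lemma frac_lt_helper:
  assumes "(g::real) > 0" "b \<ge> 0"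
  shows "g / (3 * (b + 1)) * b < g / 3"
proof -
  have bp: "b + 1 > 0" using assms(2) by linarith
  have "b / (b + 1) < 1" using bp by (simp add: divide_less_eq)
  have "g / (3 * (b + 1)) * b = g / 3 * (b / (b + 1))" by simp
  also have "\<dots> < g / 3 * 1" by (rule mult_strict_left_mono) (use \<open>b / (b + 1) < 1\<close> assms in auto)
  finally show ?thesis by simp
qed

lemma local_claimA:
  fixes \<Omega> \<Sigma> :: "'a::euclidean_space set" and u :: "'a \<Rightarrow> real"
  assumes sub: "\<Sigma> \<subseteq> \<Omega>" and oOS: "open (\<Omega> - \<Sigma>)"
    and C2: "Ck_on 2 (\<Omega> - \<Sigma>) u" and lap: "\<forall>x\<in>\<Omega> - \<Sigma>. laplacian u x \<ge> 0"
    and ub: "\<forall>x\<in>\<Omega> - \<Sigma>. u x \<le> 1"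
    and r: "r > 0" and oU: "open U" and cb: "cball p r \<subseteq> U \<inter> \<Omega>"
    and F1: "Ck_on 3 U f1" and F2: "Ck_on 3 U f2"
    and zero: "\<And>x. x \<in> \<Sigma> \<inter> U \<Longrightarrow> f1 x = 0 \<and> f2 x = 0"
    and L1: "\<Lambda> \<ge> 1" and d0: "d0 > 0" and good: "\<And>y. y \<in> cball p r \<Longrightarrow> goodpt \<Lambda> d0 f1 f2 y"
    and hyp: "\<forall>y\<in>sphere p r - \<Sigma>. u y + \<beta> \<bullet> y \<le> M"
    and x0: "x0 \<in> ball p r" and nz: "\<not> (f1 x0 = 0 \<and> f2 x0 = 0)"
  shows "u x0 + \<beta> \<bullet> x0 \<le> M"
proof (rule ccontr)
  assume "\<not> u x0 + \<beta> \<bullet> x0 \<le> M"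
  define h where "h y = u y + \<beta> \<bullet> y" for y
  define gap where "gap = h x0 - M"
  have gap: "gap > 0" using \<open>\<not> u x0 + \<beta> \<bullet> x0 \<le> M\<close> by (simp add: gap_def h_def)
  define n where "n = DIM('a)"
  define K where "K = bK \<Lambda> d0 n"
  define CG where "CG = bCG \<Lambda> d0 n"
  define Q where "Q = bQ f1 f2"
  define G where "G = bG K f1 f2"
  have Knn: "K \<ge> 0" unfolding K_def using bK_nonneg L1 d0 by blast
  have npos: "real n > 0" by (simp add: n_def)
  have est: "Q y > 0 \<and> (\<Sum>i\<in>Basis. bG2 K f1 f2 i y) \<le> CG" if "y \<in> cball p r" "\<not> (f1 y = 0 \<and> f2 y = 0)" for y
    using bG2_sum_bound[of \<Lambda> f1 y f2 d0] good[OF that(1)] L1 d0 that(2)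
    unfolding goodpt_def K_def CG_def Q_def n_def by blast
  have QZ: "Q y = 0" if "f1 y = 0 \<and> f2 y = 0" for y using that by (simp add: Q_def bQ_def)
  have cbU: "cball p r \<subseteq> U" and cbO: "cball p r \<subseteq> \<Omega>" using cb by auto
  have inOS: "y \<in> \<Omega> - \<Sigma>" if "y \<in> cball p r" "Q y > 0" for y
  proof -
    have "y \<notin> \<Sigma>" using zero[of y] QZ[of y] that cbU by force
    then show ?thesis using cbO that by blast
  qed
  have Qpos_iff: "Q y > 0 \<longleftrightarrow> \<not> (f1 y = 0 \<and> f2 y = 0)" if "y \<in> cball p r" for y
    using est[OF that] QZ[of y] by force
  have Qc: "continuous_on U Q" unfolding Q_def by (rule bQ_cont[OF F1 F2])
  obtain Qm0 where Qm0: "\<forall>y\<in>cball p r. \<bar>Q y\<bar> \<le> Qm0" using cont_bound[OF Qc compact_cball cbU] by blast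
  define Qm where "Qm = max 1 Qm0"
  have Qm: "Qm \<ge> 1" "\<And>y. y \<in> cball p r \<Longrightarrow> Q y \<le> Qm" using Qm0 unfolding Qm_def by force+
  define Gm where "Gm = - ln Qm - K * sqrt Qm"
  have Gm: "G y \<ge> Gm" if "y \<in> cball p r" "Q y > 0" for y
  proof -
    have "ln (Q y) \<le> ln Qm" using Qm(2)[OF that(1)] that(2) by simp
    moreover have "sqrt (Q y) \<le> sqrt Qm" using Qm(2)[OF that(1)] by simp
    then have "K * sqrt (Q y) \<le> K * sqrt Qm" using Knn by (simp add: mult_left_mono)
    ultimately show ?thesis unfolding G_def Gm_def bG_def Q_def[symmetric] by linarith
  qed
  have x0cb: "x0 \<in> cball p r" using x0 by auto
  have Qx0: "Q x0 > 0" using Qpos_iff[OF x0cb] nz by simp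
  define \<delta> where "\<delta> = gap / (3 * (r^2 + 1))"
  have \<delta>: "\<delta> > 0" "\<delta> * r^2 < gap / 3"
  proof -
    have "r^2 \<ge> 0" by simp
    then have "3 * (r^2 + 1) > 0" by (smt (verit))
    then show "\<delta> > 0" using gap unfolding \<delta>_def by (rule divide_pos_pos[rotated])
    have "\<delta> * r^2 = gap / 3 * (r^2 / (r^2 + 1))" by (simp add: \<delta>_def field_simps)
    also have "\<dots> < gap / 3 * 1"
    proof (rule mult_strict_left_mono)
      have "r^2 \<ge> 0" by simp
      then have "r^2 + 1 > 0" by linarith
      then show "r^2 / (r^2 + 1) < 1" by (simp add: divide_less_eq)
      show "gap / 3 > 0" using gap by simp
    qed
    finally show "\<delta> * r^2 < gap / 3" by simp
  qed
  define \<epsilon> where "\<epsilon> = min (real n * \<delta> / (\<bar>CG\<bar> + 1)) (gap / (3 * (\<bar>G x0 - Gm\<bar> + 1)))"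
  have \<epsilon>: "\<epsilon> > 0" "\<epsilon> * CG < 2 * real n * \<delta>" "\<epsilon> * (G x0 - Gm) < gap / 3"
  proof -
    have q1: "\<bar>CG\<bar> + 1 > 0" by (smt (verit) abs_ge_zero)
    have q2: "3 * (\<bar>G x0 - Gm\<bar> + 1) > 0" by (smt (verit) abs_ge_zero)
    have q3: "real n * \<delta> > 0" using npos \<delta> by simp
    show "\<epsilon> > 0" unfolding \<epsilon>_def using divide_pos_pos[OF q3 q1] divide_pos_pos[OF gap q2] by simp
    have "\<epsilon> * CG \<le> \<epsilon> * \<bar>CG\<bar>" using \<open>\<epsilon> > 0\<close> by (simp add: mult_left_mono)
    also have "\<dots> \<le> real n * \<delta> / (\<bar>CG\<bar> + 1) * \<bar>CG\<bar>" unfolding \<epsilon>_def by (intro mult_right_mono) auto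
    also have "\<dots> \<le> real n * \<delta>" using npos \<delta> by (simp add: field_simps)
    also have "\<dots> < 2 * real n * \<delta>" using npos \<delta> by simp
    finally show "\<epsilon> * CG < 2 * real n * \<delta>" .
    have "\<epsilon> * (G x0 - Gm) \<le> \<epsilon> * \<bar>G x0 - Gm\<bar>" using \<open>\<epsilon> > 0\<close> by (simp add: mult_left_mono)
    also have "\<dots> \<le> gap / (3 * (\<bar>G x0 - Gm\<bar> + 1)) * \<bar>G x0 - Gm\<bar>" unfolding \<epsilon>_def by (intro mult_right_mono) auto
    also have "\<dots> < gap / 3" using frac_lt_helper[OF gap, of "\<bar>G x0 - Gm\<bar>"] by simp
    finally show "\<epsilon> * (G x0 - Gm) < gap / 3" .
  qed
  define w where "w y = u y + \<beta> \<bullet> y + \<delta> * ((y - p) \<bullet> (y - p)) - \<epsilon> * G y" for y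
  define Hb where "Hb = 1 + norm \<beta> * (norm p + r)"
  have hb: "h y \<le> Hb" if "y \<in> cball p r" "Q y > 0" for y
  proof -
    have "u y \<le> 1" using ub inOS[OF that] by blast
    moreover have "\<beta> \<bullet> y \<le> norm \<beta> * (norm p + r)"
    proof -
      have "norm y \<le> norm p + r" using that(1) norm_triangle_sub[of y p]
        by (simp add: dist_norm norm_minus_commute)
      then have "norm \<beta> * norm y \<le> norm \<beta> * (norm p + r)" by (simp add: mult_left_mono)
      moreover have "\<beta> \<bullet> y \<le> norm \<beta> * norm y" by (metis Cauchy_Schwarz_ineq2 abs_le_iff)
      ultimately show ?thesis by linarith
    qed
    ultimately show ?thesis unfolding h_def Hb_def by linarith
  qed
  have sqn: "(y - p) \<bullet> (y - p) \<le> r^2" if "y \<in> cball p r" for y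
  proof -
    have "norm (y - p) \<le> r" using that by (simp add: dist_norm norm_minus_commute)
    then have "(norm (y - p))^2 \<le> r^2" by (simp add: power_mono)
    then show ?thesis by (simp add: power2_norm_eq_inner)
  qed
  have sqnn: "(y - p) \<bullet> (y - p) \<ge> 0" for y by simp
  define \<eta> where "\<eta> = exp ((w x0 - Hb - \<delta> * r^2 - \<epsilon> * K * sqrt Qm) / \<epsilon>)"
  have \<eta>: "\<eta> > 0" by (simp add: \<eta>_def)
  have small: "w y < w x0" if y: "y \<in> cball p r" "Q y > 0" "Q y < \<eta>" for y
  proof -
    have "ln (Q y) < ln \<eta>" using y \<eta> by simp
    then have l: "ln (Q y) < (w x0 - Hb - \<delta> * r^2 - \<epsilon> * K * sqrt Qm) / \<epsilon>" by (simp add: \<eta>_def)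
    have "\<epsilon> * ln (Q y) < w x0 - Hb - \<delta> * r^2 - \<epsilon> * K * sqrt Qm"
      using mult_strict_left_mono[OF l \<epsilon>(1)] \<epsilon>(1) by simp
    moreover have "sqrt (Q y) \<le> sqrt Qm" using Qm(2)[OF y(1)] by simp
    then have "\<epsilon> * (K * sqrt (Q y)) \<le> \<epsilon> * (K * sqrt Qm)" using Knn \<epsilon>(1) by (simp add: mult_left_mono)
    moreover have "\<delta> * ((y - p) \<bullet> (y - p)) \<le> \<delta> * r^2" using sqn[OF y(1)] \<delta>(1) by (simp add: mult_left_mono)
    moreover have "h y \<le> Hb" using hb y by blast
    moreover have "w y = h y + \<delta> * ((y - p) \<bullet> (y - p)) + \<epsilon> * ln (Q y) + \<epsilon> * (K * sqrt (Q y))"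
      unfolding w_def h_def G_def bG_def Q_def by (simp add: algebra_simps)
    ultimately show ?thesis by (simp add: algebra_simps)
  qed
  define Ks where "Ks = cball p r \<inter> Q -` {\<eta>..}"
  have Qcb: "continuous_on (cball p r) Q" using continuous_on_subset[OF Qc cbU] .
  have clK: "closed Ks" unfolding Ks_def by (rule continuous_closed_preimage[OF Qcb closed_cball closed_atLeast])
  have cpK: "compact Ks"
  proof -
    have "compact (cball p r \<inter> Ks)" by (rule compact_Int_closed[OF compact_cball clK])
    moreover have "cball p r \<inter> Ks = Ks" unfolding Ks_def by blast
    ultimately show ?thesis by simp
  qed
  have Kprops: "y \<in> cball p r \<and> Q y \<ge> \<eta> \<and> Q y > 0 \<and> y \<in> \<Omega> - \<Sigma> \<and> y \<in> U" if "y \<in> Ks" for y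
  proof -
    have a: "y \<in> cball p r" "Q y \<ge> \<eta>" using that unfolding Ks_def by auto
    then have "Q y > 0" using \<eta> by linarith
    then show ?thesis using a inOS cbU by blast
  qed
  have x0K: "x0 \<in> Ks"
  proof (rule ccontr)
    assume "x0 \<notin> Ks"
    then have "Q x0 < \<eta>" using x0cb unfolding Ks_def by auto
    then show False using small[OF x0cb Qx0] by simp
  qed
  have uc: "continuous_on (\<Omega> - \<Sigma>) u" using Ck_on_cont[OF C2] .
  have wc: "continuous_on Ks w"
  proof -
    have KOS: "Ks \<subseteq> \<Omega> - \<Sigma>" and KU: "Ks \<subseteq> U" using Kprops by auto
    have Qk: "continuous_on Ks Q" using continuous_on_subset[OF Qc KU] .
    have Qnz: "\<forall>y\<in>Ks. Q y \<noteq> 0" using Kprops by force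
    have Gc: "continuous_on Ks G" unfolding G_def bG_def[abs_def] Q_def[symmetric]
      by (intro continuous_intros continuous_on_ln Qk Qnz continuous_on_real_sqrt)
    show ?thesis unfolding w_def[abs_def]
      by (intro continuous_intros continuous_on_subset[OF uc KOS] Gc)
  qed
  obtain xs where xs: "xs \<in> Ks" "\<And>y. y \<in> Ks \<Longrightarrow> w y \<le> w xs"
    using continuous_attains_sup[OF cpK _ wc] x0K by blast
  have xsp: "xs \<in> cball p r" "Q xs \<ge> \<eta>" "Q xs > 0" "xs \<in> \<Omega> - \<Sigma>" "xs \<in> U" using Kprops[OF xs(1)] by auto
  have wx0: "w x0 \<le> w xs" using xs(2)[OF x0K] .
  have wx0low: "w x0 \<ge> M + gap - \<epsilon> * G x0"
  proof -
    have "\<delta> * ((x0 - p) \<bullet> (x0 - p)) \<ge> 0" using \<delta>(1) by simp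
    then show ?thesis unfolding w_def gap_def h_def by simp
  qed
  show False
  proof (cases "dist p xs = r")
    case True
    then have "xs \<in> sphere p r - \<Sigma>" using xsp by auto
    then have hxs: "h xs \<le> M" using hyp unfolding h_def by blast
    have "(xs - p) \<bullet> (xs - p) = r^2" using True by (simp add: dist_norm power2_norm_eq_inner[symmetric] norm_minus_commute)
    then have weq: "w xs = h xs + \<delta> * r^2 - \<epsilon> * G xs" unfolding w_def h_def by simp
    have "\<epsilon> * Gm \<le> \<epsilon> * G xs" using Gm[OF xsp(1) xsp(3)] \<epsilon>(1) by (simp add: mult_left_mono)
    then have "w xs \<le> M + \<delta> * r^2 - \<epsilon> * Gm" using weq hxs by linarith
    moreover have "\<epsilon> * (G x0 - Gm) = \<epsilon> * G x0 - \<epsilon> * Gm" by (simp add: algebra_simps)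
    ultimately show False using wx0 wx0low \<epsilon>(3) \<delta>(2) gap by linarith
  next
    case False
    then have dxs: "dist p xs < r" using xsp(1) by simp
    have Qat: "isCont Q xs" using Qc oU xsp(5) continuous_on_eq_continuous_at by blast
    then have "\<exists>d>0. \<forall>z. dist z xs < d \<longrightarrow> dist (Q z) (Q xs) < Q xs"
      using xsp(3) unfolding continuous_at_eps_delta by blast
    then obtain s1 where s1: "s1 > 0" "\<And>z. dist z xs < s1 \<Longrightarrow> dist (Q z) (Q xs) < Q xs" by blast
    define s where "s = min s1 (r - dist p xs)"
    have s: "s > 0" using s1 dxs by (simp add: s_def)
    have zball: "z \<in> U \<and> Q z > 0 \<and> z \<in> \<Omega> - \<Sigma> \<and> w z \<le> w xs" if z: "dist z xs < s" for z
    proof -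
      have "dist p z \<le> dist p xs + dist xs z" by (rule dist_triangle)
      then have zc: "z \<in> cball p r" using z by (simp add: s_def dist_commute)
      have "dist (Q z) (Q xs) < Q xs" using s1(2)[of z] z by (simp add: s_def)
      then have Qz: "Q z > 0" by (simp add: dist_real_def abs_less_iff)
      have wz: "w z \<le> w xs"
      proof (cases "Q z \<ge> \<eta>")
        case True
        then have "z \<in> Ks" using zc unfolding Ks_def by auto
        then show ?thesis using xs(2) by blast
      next
        case False
        then show ?thesis using small[OF zc Qz] wx0 by simp
      qed
      show ?thesis using zc Qz inOS cbU wz by blast
    qed
    have C2': "Ck_on (Suc (Suc 0)) (\<Omega> - \<Sigma>) u" using C2 by (simp add: numeral_2_eq_2)
    have udiff: "u differentiable (at z)" if "z \<in> \<Omega> - \<Sigma>" for z using C2' that by simp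
    have pudiff: "partial u i differentiable (at xs)" if "i \<in> Basis" for i
      using Ck_on_partial[OF C2' that] xsp(4) by simp
    have each: "partial (partial u i) i xs + 2 * \<delta> - \<epsilon> * bG2 K f1 f2 i xs \<le> 0" if i: "i \<in> Basis" for i
    proof (rule second_deriv_test[OF s, of "\<lambda>t. w (xs + t *\<^sub>R i)"
        "\<lambda>t. partial u i (xs + t *\<^sub>R i) + \<beta> \<bullet> i + \<delta> * (2 * ((xs + t *\<^sub>R i - p) \<bullet> i)) - \<epsilon> * bG1 K f1 f2 i (xs + t *\<^sub>R i)"])
      fix t :: real assume t: "\<bar>t\<bar> < s"
      have dz: "dist (xs + t *\<^sub>R i) xs < s" using t i by (simp add: dist_norm)
      note zb = zball[OF dz]
      show "w (xs + t *\<^sub>R i) \<le> w (xs + 0 *\<^sub>R i)" using zb by simp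
      have gd: "((\<lambda>s. bG K f1 f2 (xs + s *\<^sub>R i)) has_real_derivative bG1 K f1 f2 i (xs + t *\<^sub>R i)) (at t)"
        by (rule bG_deriv[OF F1 F2 i]) (use zb in \<open>auto simp: Q_def\<close>)
      show "((\<lambda>t. w (xs + t *\<^sub>R i)) has_real_derivative
          partial u i (xs + t *\<^sub>R i) + \<beta> \<bullet> i + \<delta> * (2 * ((xs + t *\<^sub>R i - p) \<bullet> i)) - \<epsilon> * bG1 K f1 f2 i (xs + t *\<^sub>R i)) (at t)"
        unfolding w_def G_def
        by (rule w_line_deriv1[where G="bG K f1 f2" and ?G1.0="bG1 K f1 f2 i"]) (use zb udiff gd in auto)
    next
      have gd: "((\<lambda>s. bG1 K f1 f2 i (xs + s *\<^sub>R i)) has_real_derivative bG2 K f1 f2 i xs) (at 0)"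
        using bG1_deriv[OF F1 F2 i, of xs 0 K] xsp by (simp add: Q_def)
      show "((\<lambda>t. partial u i (xs + t *\<^sub>R i) + \<beta> \<bullet> i + \<delta> * (2 * ((xs + t *\<^sub>R i - p) \<bullet> i)) - \<epsilon> * bG1 K f1 f2 i (xs + t *\<^sub>R i))
          has_real_derivative partial (partial u i) i xs + 2 * \<delta> - \<epsilon> * bG2 K f1 f2 i xs) (at 0)"
        by (rule w_line_deriv2[OF pudiff[OF i] i gd])
    qed
    have "(\<Sum>i\<in>Basis. partial (partial u i) i xs + 2 * \<delta> - \<epsilon> * bG2 K f1 f2 i xs) \<le> 0"
      using each by (simp add: sum_nonpos)
    moreover have "(\<Sum>i\<in>Basis. partial (partial u i) i xs + 2 * \<delta> - \<epsilon> * bG2 K f1 f2 i xs)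
        = laplacian u xs + 2 * real n * \<delta> - \<epsilon> * (\<Sum>i\<in>Basis. bG2 K f1 f2 i xs)"
      unfolding laplacian_def n_def by (simp add: sum.distrib sum_subtractf sum_distrib_left)
    moreover have "laplacian u xs \<ge> 0" using lap xsp(4) by blast
    moreover have "(\<Sum>i\<in>Basis. bG2 K f1 f2 i xs) \<le> CG"
      using est[OF xsp(1)] Qpos_iff[OF xsp(1)] xsp(3) by blast
    then have "\<epsilon> * (\<Sum>i\<in>Basis. bG2 K f1 f2 i xs) \<le> \<epsilon> * CG" using \<epsilon>(1) by (simp add: mult_left_mono)
    ultimately show False using \<epsilon>(2) by linarith
  qed
qed

lemma local_maxprin:
  fixes \<Omega> \<Sigma> :: "'a::euclidean_space set" and u :: "'a \<Rightarrow> real"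
  assumes oO: "open \<Omega>" and sub: "\<Sigma> \<subseteq> \<Omega>" and sm: "smooth_submanifold_codim2 \<Sigma>" and p: "p \<in> \<Sigma>"
    and oOS: "open (\<Omega> - \<Sigma>)"
    and C2: "Ck_on 2 (\<Omega> - \<Sigma>) u" and lap: "\<forall>x\<in>\<Omega> - \<Sigma>. laplacian u x \<ge> 0"
    and ub: "\<forall>x\<in>\<Omega> - \<Sigma>. u x \<le> 1"
  shows "\<exists>r>0. cball p r \<subseteq> \<Omega> \<and> (\<forall>\<beta> M. (\<forall>y\<in>sphere p r - \<Sigma>. u y + \<beta> \<bullet> y \<le> M) \<longrightarrow>
            (\<forall>x\<in>ball p r - \<Sigma>. u x + \<beta> \<bullet> x \<le> M))"
proof -
  obtain r U f1 f2 \<Lambda> d0 where r: "r > 0" and oU: "open U" and cb: "cball p r \<subseteq> U \<inter> \<Omega>"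
    and F1: "Ck_on 3 U f1" and F2: "Ck_on 3 U f2"
    and zero: "\<And>x. x \<in> \<Sigma> \<inter> U \<Longrightarrow> f1 x = 0 \<and> f2 x = 0" and L1: "\<Lambda> \<ge> 1" and d0: "d0 > 0"
    and good: "\<And>y. y \<in> cball p r \<Longrightarrow> goodpt \<Lambda> d0 f1 f2 y"
    using barrier_setup[OF oO sub sm p] by blast
  show ?thesis
  proof (intro exI[of _ r] conjI allI impI ballI)
    show "r > 0" using r .
    show "cball p r \<subseteq> \<Omega>" using cb by blast
    fix \<beta> M x
    assume hyp: "\<forall>y\<in>sphere p r - \<Sigma>. u y + \<beta> \<bullet> y \<le> M" and x: "x \<in> ball p r - \<Sigma>"
    have A: "u y + \<beta> \<bullet> y \<le> M" if "y \<in> ball p r" "\<not> (f1 y = 0 \<and> f2 y = 0)" for y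
      by (rule local_claimA[OF sub oOS C2 lap ub r oU cb F1 F2 _ L1 d0 _ hyp that]) (use zero good in auto)
    show "u x + \<beta> \<bullet> x \<le> M"
    proof (cases "f1 x = 0 \<and> f2 x = 0")
      case False
      then show ?thesis using A x by blast
    next
      case True
      show ?thesis
      proof (rule ccontr)
        assume "\<not> u x + \<beta> \<bullet> x \<le> M"
        define gap where "gap = u x + \<beta> \<bullet> x - M"
        have gap: "gap > 0" using \<open>\<not> u x + \<beta> \<bullet> x \<le> M\<close> by (simp add: gap_def)
        have xOS: "x \<in> \<Omega> - \<Sigma>" using x cb by auto
        have uc: "isCont u x" using Ck_on_cont[OF C2] oOS xOS continuous_on_eq_continuous_at by blast
        have hc: "isCont (\<lambda>y. u y + \<beta> \<bullet> y) x" by (intro continuous_intros uc)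
        then have "\<exists>d>0. \<forall>z. dist z x < d \<longrightarrow> dist (u z + \<beta> \<bullet> z) (u x + \<beta> \<bullet> x) < gap"
          using gap unfolding continuous_at_eps_delta by blast
        then obtain s0 where s0: "s0 > 0" "\<And>z. dist z x < s0 \<Longrightarrow> dist (u z + \<beta> \<bullet> z) (u x + \<beta> \<bullet> x) < gap"
          by blast
        define s where "s = min s0 (r - dist p x)"
        have s: "s > 0" using s0 x by (simp add: s_def)
        have ex: "\<exists>z. dist z x < s \<and> \<not> (f1 z = 0 \<and> f2 z = 0)"
        proof (rule ccontr)
          assume "\<not> (\<exists>z. dist z x < s \<and> \<not> (f1 z = 0 \<and> f2 z = 0))"
          then have Z: "\<And>z. z \<in> ball x s \<Longrightarrow> f1 z = 0 \<and> f2 z = 0" by (auto simp: dist_commute)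
          have "(f1 has_derivative (\<lambda>h. 0)) (at x)"
            by (rule has_derivative_transform_within_open[OF has_derivative_const[of 0] open_ball, of x])
               (use s Z in auto)
          then have fd: "frechet_derivative f1 (at x) = (\<lambda>h. 0)" using frechet_derivative_at by metis
          then have "gA f1 f1 x = 0" "gA f1 f2 x = 0" unfolding gA_def partial_def by simp_all
          moreover have "d0 \<le> gA f1 f1 x * gA f2 f2 x - (gA f1 f2 x)^2"
            using good[of x] x unfolding goodpt_def by auto
          ultimately show False using d0 by simp
        qed
        then obtain z where z: "dist z x < s" "\<not> (f1 z = 0 \<and> f2 z = 0)" by blast
        have "dist p z \<le> dist p x + dist x z" by (rule dist_triangle)
        then have zb: "z \<in> ball p r" using z(1) by (simp add: s_def dist_commute)
        have "u z + \<beta> \<bullet> z \<le> M" using A[OF zb z(2)] .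
        moreover have "dist (u z + \<beta> \<bullet> z) (u x + \<beta> \<bullet> x) < gap" using s0(2)[of z] z(1) by (simp add: s_def)
        ultimately show False unfolding gap_def dist_real_def by linarith
      qed
    qed
  qed
qed

lemma interior_max_contra:
  fixes u :: "'a::euclidean_space \<Rightarrow> real"
  assumes oS: "open S" and C2: "Ck_on 2 S u" and l: "l \<in> S" and lap: "\<forall>x\<in>S. laplacian u x \<ge> 0"
    and \<delta>: "\<delta> > 0" and mx: "\<forall>x\<in>S. u x + \<delta> * (x \<bullet> x) \<le> u l + \<delta> * (l \<bullet> l)"
  shows False
proof -
  obtain e where e: "e > 0" "ball l e \<subseteq> S" using oS l open_contains_ball by blast
  have C2': "Ck_on (Suc (Suc 0)) S u" using C2 by (simp add: numeral_2_eq_2)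
  have udiff: "u differentiable (at z)" if "z \<in> S" for z using C2' that by simp
  have pudiff: "partial u i differentiable (at l)" if "i \<in> Basis" for i
    using Ck_on_partial[OF C2' that] l by simp
  have G0: "((\<lambda>s. (\<lambda>_. 0::real) (y + s *\<^sub>R i)) has_real_derivative (\<lambda>_. 0) (y + t *\<^sub>R i)) (at t)" for y t i
    by simp
  have each: "partial (partial u i) i l + 2 * \<delta> \<le> 0" if i: "i \<in> Basis" for i
  proof -
    have "partial (partial u i) i l + 2 * \<delta> - 0 * 0 \<le> 0"
    proof (rule second_deriv_test[OF e(1), of "\<lambda>t. u (l + t *\<^sub>R i) + 0 \<bullet> (l + t *\<^sub>R i) + \<delta> * ((l + t *\<^sub>R i - 0) \<bullet> (l + t *\<^sub>R i - 0)) - 0 * (\<lambda>_. 0) (l + t *\<^sub>R i)"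
        "\<lambda>t. partial u i (l + t *\<^sub>R i) + 0 \<bullet> i + \<delta> * (2 * ((l + t *\<^sub>R i - 0) \<bullet> i)) - 0 * (\<lambda>_. 0) (l + t *\<^sub>R i)"])
      fix t :: real assume t: "\<bar>t\<bar> < e"
      have dz: "l + t *\<^sub>R i \<in> S" using e t i by (auto simp: dist_norm intro!: subsetD[OF e(2)])
      show "u (l + t *\<^sub>R i) + 0 \<bullet> (l + t *\<^sub>R i) + \<delta> * ((l + t *\<^sub>R i - 0) \<bullet> (l + t *\<^sub>R i - 0)) - 0 * (\<lambda>_. 0) (l + t *\<^sub>R i)
          \<le> u (l + 0 *\<^sub>R i) + 0 \<bullet> (l + 0 *\<^sub>R i) + \<delta> * ((l + 0 *\<^sub>R i - 0) \<bullet> (l + 0 *\<^sub>R i - 0)) - 0 * (\<lambda>_. 0) (l + 0 *\<^sub>R i)"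
        using mx dz by simp
      show "((\<lambda>t. u (l + t *\<^sub>R i) + 0 \<bullet> (l + t *\<^sub>R i) + \<delta> * ((l + t *\<^sub>R i - 0) \<bullet> (l + t *\<^sub>R i - 0)) - 0 * (\<lambda>_. 0) (l + t *\<^sub>R i))
          has_real_derivative partial u i (l + t *\<^sub>R i) + 0 \<bullet> i + \<delta> * (2 * ((l + t *\<^sub>R i - 0) \<bullet> i)) - 0 * (\<lambda>_. 0) (l + t *\<^sub>R i)) (at t)"
        by (rule w_line_deriv1[OF udiff[OF dz] G0])
    next
      show "((\<lambda>t. partial u i (l + t *\<^sub>R i) + 0 \<bullet> i + \<delta> * (2 * ((l + t *\<^sub>R i - 0) \<bullet> i)) - 0 * (\<lambda>_. 0) (l + t *\<^sub>R i))
          has_real_derivative partial (partial u i) i l + 2 * \<delta> - 0 * 0) (at 0)"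
        by (rule w_line_deriv2[OF pudiff[OF i] i]) simp
    qed
    then show ?thesis by simp
  qed
  have "(\<Sum>i\<in>Basis. partial (partial u i) i l + 2 * \<delta>) \<le> 0" using each by (simp add: sum_nonpos)
  moreover have "(\<Sum>i\<in>Basis. partial (partial u i) i l + 2 * \<delta>) = laplacian u l + 2 * real DIM('a) * \<delta>"
    unfolding laplacian_def by (simp add: sum.distrib)
  moreover have "laplacian u l \<ge> 0" using lap l by blast
  moreover have "2 * real DIM('a) * \<delta> > 0" using \<delta> by simp
  ultimately show False by linarith
qed

lemma global_bound:
  fixes \<Omega> \<Sigma> :: "'a::euclidean_space set" and u :: "'a \<Rightarrow> real"
  assumes oO: "open \<Omega>" and bO: "bounded \<Omega>" and sub: "\<Sigma> \<subseteq> \<Omega>" and sm: "smooth_submanifold_codim2 \<Sigma>"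
    and oOS: "open (\<Omega> - \<Sigma>)"
    and C2: "Ck_on 2 (\<Omega> - \<Sigma>) u" and uc: "continuous_on (closure \<Omega> - \<Sigma>) u"
    and lap: "\<forall>x\<in>\<Omega> - \<Sigma>. laplacian u x \<ge> 0"
    and ub: "\<forall>x\<in>\<Omega> - \<Sigma>. u x \<le> 1" and bd: "\<forall>x\<in>frontier \<Omega>. u x = 0"
    and \<delta>: "\<delta> > 0" and R: "\<forall>x\<in>closure \<Omega>. x \<bullet> x \<le> R"
  shows "\<forall>x\<in>\<Omega> - \<Sigma>. u x + \<delta> * (x \<bullet> x) \<le> \<delta> * R"
proof (cases "\<Omega> - \<Sigma> = {}")
  case True then show ?thesis by blast
next
  case ne: False
  define v where "v x = u x + \<delta> * (x \<bullet> x)" for x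
  define S where "S = (SUP x\<in>\<Omega> - \<Sigma>. v x)"
  have vb: "v x \<le> 1 + \<delta> * R" if "x \<in> \<Omega> - \<Sigma>" for x
  proof -
    have "x \<in> closure \<Omega>" using that closure_subset by blast
    then have "x \<bullet> x \<le> R" using R by blast
    then have "\<delta> * (x \<bullet> x) \<le> \<delta> * R" using \<delta> by (simp add: mult_left_mono)
    then show ?thesis using ub that unfolding v_def by force
  qed
  have bdd: "bdd_above (v ` (\<Omega> - \<Sigma>))" using vb by (intro bdd_aboveI2) blast
  have vS: "v x \<le> S" if "x \<in> \<Omega> - \<Sigma>" for x unfolding S_def using bdd that by (rule cSUP_upper2) simp
  have "S \<le> \<delta> * R"
  proof (rule ccontr)
    assume "\<not> S \<le> \<delta> * R"
    then have SR: "S > \<delta> * R" by simp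
    have "\<forall>k::nat. \<exists>x\<in>\<Omega> - \<Sigma>. S - 1 / (real k + 1) < v x"
    proof
      fix k :: nat
      have "S - 1 / (real k + 1) < S" by simp
      then show "\<exists>x\<in>\<Omega> - \<Sigma>. S - 1 / (real k + 1) < v x"
        unfolding S_def using less_cSUP_iff[OF ne bdd] by blast
    qed
    then obtain xk where xk: "\<And>k. xk k \<in> \<Omega> - \<Sigma>" "\<And>k. S - 1 / (real k + 1) < v (xk k)" by metis
    have "compact (closure \<Omega>)" using bO by (simp add: compact_closure)
    then have "seq_compact (closure \<Omega>)" by (rule compact_imp_seq_compact)
    moreover have "\<forall>k. xk k \<in> closure \<Omega>" using xk(1) closure_subset by blast
    ultimately obtain l \<sigma> where l: "l \<in> closure \<Omega>" "strict_mono \<sigma>" "(xk \<circ> \<sigma>) \<longlonglongrightarrow> l"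
      unfolding seq_compact_def by blast
    have approx: "\<exists>k. dist (xk (\<sigma> k)) l < \<eta> \<and> S - \<eta> < v (xk (\<sigma> k))" if \<eta>: "\<eta> > 0" for \<eta>
    proof -
      obtain N where N: "\<And>k. k \<ge> N \<Longrightarrow> dist ((xk \<circ> \<sigma>) k) l < \<eta>"
        using l(3) \<eta> unfolding lim_sequentially by blast
      obtain m :: nat where m: "inverse (real (Suc m)) < \<eta>" using reals_Archimedean \<eta> by blast
      define k where "k = max N m"
      have "real m \<le> real (\<sigma> k)" using seq_suble[OF l(2), of k] by (simp add: k_def)
      then have "1 / (real (\<sigma> k) + 1) \<le> 1 / (real m + 1)" by (intro divide_left_mono) auto
      also have "\<dots> < \<eta>" using m by (simp add: inverse_eq_divide add.commute)
      finally have "S - \<eta> < v (xk (\<sigma> k))" using xk(2)[of "\<sigma> k"] by linarith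
      moreover have "dist (xk (\<sigma> k)) l < \<eta>" using N[of k] by (simp add: k_def)
      ultimately show ?thesis by blast
    qed
    show False
    proof (cases "l \<in> \<Omega>")
      case False
      then have lf: "l \<in> frontier \<Omega>" using l(1) oO by (simp add: frontier_def interior_open)
      have lnS: "l \<notin> \<Sigma>" using False sub by blast
      have vc: "continuous_on (closure \<Omega> - \<Sigma>) v" unfolding v_def[abs_def] by (intro continuous_intros uc)
      have "l \<in> closure \<Omega> - \<Sigma>" using l(1) lnS by blast
      then have "continuous (at l within (closure \<Omega> - \<Sigma>)) v" using vc continuous_on_eq_continuous_within by blast
      then obtain d where d: "d > 0" "\<And>y. y \<in> closure \<Omega> - \<Sigma> \<Longrightarrow> dist y l < d \<Longrightarrow> dist (v y) (v l) < (S - \<delta> * R) / 2"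
        using SR unfolding continuous_within_eps_delta by (metis half_gt_zero diff_gt_0_iff_gt)
      obtain k where k: "dist (xk (\<sigma> k)) l < min d ((S - \<delta> * R) / 2)" "S - min d ((S - \<delta> * R) / 2) < v (xk (\<sigma> k))"
        using approx[of "min d ((S - \<delta> * R) / 2)"] d SR by auto
      have "xk (\<sigma> k) \<in> closure \<Omega> - \<Sigma>" using xk(1) closure_subset by blast
      then have "dist (v (xk (\<sigma> k))) (v l) < (S - \<delta> * R) / 2" using d(2) k(1) by simp
      moreover have "v l \<le> \<delta> * R" using bd lf R l(1) \<delta> unfolding v_def by (simp add: mult_left_mono)
      moreover have "min d ((S - \<delta> * R) / 2) \<le> (S - \<delta> * R) / 2" by (rule min.cobounded2)
      ultimately show False using k(2) unfolding dist_real_def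
        by (simp only: abs_less_iff diff_divide_distrib, elim conjE) linarith
    next
      case True
      show False
      proof (cases "l \<in> \<Sigma>")
        case False
        then have lOS: "l \<in> \<Omega> - \<Sigma>" using True by blast
        have vc: "isCont v l" unfolding v_def[abs_def]
          using Ck_on_cont[OF C2] oOS lOS continuous_on_eq_continuous_at by (auto intro!: continuous_intros)
        have "v l \<ge> S"
        proof (rule ccontr)
          assume "\<not> v l \<ge> S"
          then have g: "S - v l > 0" by simp
          obtain d where d: "d > 0" "\<And>y. dist y l < d \<Longrightarrow> dist (v y) (v l) < (S - v l) / 2"
            using vc g unfolding continuous_at_eps_delta by (metis half_gt_zero)
          obtain k where k: "dist (xk (\<sigma> k)) l < min d ((S - v l) / 2)" "S - min d ((S - v l) / 2) < v (xk (\<sigma> k))"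
            using approx[of "min d ((S - v l) / 2)"] d g by auto
          have "dist (v (xk (\<sigma> k))) (v l) < (S - v l) / 2" using d(2) k(1) by simp
          moreover have "min d ((S - v l) / 2) \<le> (S - v l) / 2" by (rule min.cobounded2)
          ultimately show False using k(2) unfolding dist_real_def
            by (simp only: abs_less_iff diff_divide_distrib, elim conjE) linarith
        qed
        then have "\<forall>x\<in>\<Omega> - \<Sigma>. u x + \<delta> * (x \<bullet> x) \<le> u l + \<delta> * (l \<bullet> l)" using vS unfolding v_def by force
        then show False using interior_max_contra[OF oOS C2 lOS lap \<delta>] by blast
      next
        case True
        obtain r where r: "r > 0" "cball l r \<subseteq> \<Omega>"
          and P: "\<And>\<beta> M. (\<forall>y\<in>sphere l r - \<Sigma>. u y + \<beta> \<bullet> y \<le> M) \<Longrightarrow> (\<forall>x\<in>ball l r - \<Sigma>. u x + \<beta> \<bullet> x \<le> M)"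
          using local_maxprin[OF oO sub sm True oOS C2 lap ub] by blast
        define \<beta> where "\<beta> = (2 * \<delta>) *\<^sub>R l"
        define M where "M = S - \<delta> * r^2 + \<delta> * (l \<bullet> l)"
        have key: "u y + \<beta> \<bullet> y = v y - \<delta> * ((y - l) \<bullet> (y - l)) + \<delta> * (l \<bullet> l)" for y
          unfolding v_def \<beta>_def by (simp add: algebra_simps inner_diff_left inner_diff_right inner_commute)
        have "\<forall>y\<in>sphere l r - \<Sigma>. u y + \<beta> \<bullet> y \<le> M"
        proof
          fix y assume y: "y \<in> sphere l r - \<Sigma>"
          then have yO: "y \<in> \<Omega> - \<Sigma>" using r(2) by auto
          have "(y - l) \<bullet> (y - l) = r^2" using y by (simp add: dist_norm power2_norm_eq_inner[symmetric] norm_minus_commute)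
          then show "u y + \<beta> \<bullet> y \<le> M" using vS[OF yO] unfolding key M_def by simp
        qed
        then have Pb: "\<forall>x\<in>ball l r - \<Sigma>. u x + \<beta> \<bullet> x \<le> M" by (rule P)
        define \<eta> where "\<eta> = min (r / 2) (\<delta> * r^2 / 2)"
        have \<eta>: "\<eta> > 0" using r \<delta> by (simp add: \<eta>_def)
        obtain k where k: "dist (xk (\<sigma> k)) l < \<eta>" "S - \<eta> < v (xk (\<sigma> k))" using approx[OF \<eta>] by blast
        define y where "y = xk (\<sigma> k)"
        have yb: "y \<in> ball l r - \<Sigma>" using k(1) xk(1) \<eta>_def r unfolding y_def by (auto simp: dist_commute)
        have "(y - l) \<bullet> (y - l) = (dist y l)^2" by (simp add: dist_norm power2_norm_eq_inner)
        also have "\<dots> \<le> (r / 2)^2" using k(1) unfolding y_def \<eta>_def by (intro power_mono) auto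
        finally have yl: "(y - l) \<bullet> (y - l) \<le> r^2 / 4" by (simp add: power_divide)
        have "v y \<le> S - \<delta> * r^2 + \<delta> * ((y - l) \<bullet> (y - l))" using Pb yb unfolding key M_def by force
        moreover have "\<delta> * ((y - l) \<bullet> (y - l)) \<le> \<delta> * (r^2 / 4)" using yl \<delta> by (simp add: mult_left_mono)
        moreover have "S - \<delta> * r^2 / 2 \<le> S - \<eta>" by (simp add: \<eta>_def)
        moreover have "\<delta> * r^2 > 0" using \<delta> r by simp
        ultimately show False using k(2) unfolding y_def by (simp add: algebra_simps)
      qed
    qed
  qed
  then show ?thesis using vS unfolding v_def by force
qed

theorem lemma2p10:
  fixes \<Omega> \<Sigma> :: "'a::euclidean_space set" and u :: "'a \<Rightarrow> real" and \<alpha> :: real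
  assumes "DIM('a) \<ge> 2"
    and "open \<Omega>" and "connected \<Omega>" and "bounded \<Omega>"
    and "0 < \<alpha>" and "\<alpha> < 1" and "C2alpha_boundary \<alpha> \<Omega>"
    and "\<Sigma> \<subseteq> \<Omega>" and "closedin (top_of_set \<Omega>) \<Sigma>"
    and "smooth_submanifold_codim2 \<Sigma>"
    and "Ck_on 2 (\<Omega> - \<Sigma>) u" and "C1_upto \<Omega> \<Sigma> u"
    and "\<forall>x\<in>\<Omega> - \<Sigma>. laplacian u x \<ge> 0"
    and "\<forall>x\<in>\<Omega> - \<Sigma>. 0 \<le> u x \<and> u x \<le> 1"
    and "\<forall>x\<in>frontier \<Omega>. u x = 0"
  shows "\<forall>x\<in>\<Omega> - \<Sigma>. u x = 0"
proof -
  note oO = assms(2) and bO = assms(4) and sub = assms(8) and cl = assms(9) and sm = assms(10)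
    and C2 = assms(11) and C1 = assms(12) and lap = assms(13) and rng = assms(14) and bd = assms(15)
  obtain T where T: "closed T" "\<Sigma> = \<Omega> \<inter> T" using cl unfolding closedin_closed by blast
  have oOS: "open (\<Omega> - \<Sigma>)"
  proof -
    have "\<Omega> - \<Sigma> = \<Omega> - T" using T by blast
    then show ?thesis using oO T(1) by (simp add: open_Diff)
  qed
  have ub: "\<forall>x\<in>\<Omega> - \<Sigma>. u x \<le> 1" using rng by blast
  have uc: "continuous_on (closure \<Omega> - \<Sigma>) u" using C1 unfolding C1_upto_def by blast
  obtain B where B: "\<forall>x\<in>closure \<Omega>. norm x \<le> B" using bounded_closure[OF bO] unfolding bounded_iff by blast
  define R where "R = B^2"
  have R: "\<forall>x\<in>closure \<Omega>. x \<bullet> x \<le> R"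
  proof
    fix x assume "x \<in> closure \<Omega>"
    then have "norm x \<le> B" using B by blast
    then have "(norm x)^2 \<le> B^2" by (simp add: power_mono)
    then show "x \<bullet> x \<le> R" by (simp add: R_def power2_norm_eq_inner)
  qed
  have R0: "R \<ge> 0" by (simp add: R_def)
  show ?thesis
  proof
    fix x assume x: "x \<in> \<Omega> - \<Sigma>"
    have u0: "u x \<ge> 0" using rng x by blast
    have "\<not> u x > 0"
    proof
      assume up: "u x > 0"
      define \<delta> where "\<delta> = u x / (2 * (R + 1))"
      have \<delta>: "\<delta> > 0" using up R0 by (simp add: \<delta>_def)
      have "u x + \<delta> * (x \<bullet> x) \<le> \<delta> * R"
        using global_bound[OF oO bO sub sm oOS C2 uc lap ub bd \<delta> R] x by blast
      moreover have "\<delta> * (x \<bullet> x) \<ge> 0" using \<delta> by simp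
      moreover have "\<delta> * R < u x"
      proof -
        have "\<delta> * R = u x / 2 * (R / (R + 1))" by (simp add: \<delta>_def)
        also have "\<dots> < u x / 2 * 1"
        proof (rule mult_strict_left_mono)
          show "R / (R + 1) < 1" using R0 by (simp add: divide_less_eq)
          show "u x / 2 > 0" using up by simp
        qed
        also have "\<dots> < u x" using up by simp
        finally show ?thesis .
      qed
      ultimately show False by linarith
    qed
    then show "u x = 0" using u0 by simp
  qed
qed

end
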